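(* Consider the algorithm LaCAM$^\ast$ described in the context below, run without interruption, on an MAPF instance $(G,A,\mathcal{S},\mathcal{G})$ with a nonnegative transition cost $c_e$ and an admissible heuristic $h$, using any agent-ordering rule and any valid configuration generator. Then the algorithm terminates after finitely many iterations, and: if the instance has a solution, it returns a solution $\Pi$ that is optimal, i.e. $c(\Pi)\le c(\Pi')$ for every solution $\Pi'$; if the instance has no solution, it returns NO_SOLUTION. (That is, LaCAM$^\ast$ is complete and optimal.)
   Context: **MAPF.** $G=(V,E)$ is a finite undirected graph; $N(v)$ denotes the set of neighbours of $v\in V$. Agents are $A=\{1,\dots,n\}$; starts $\mathcal{S}=(s_1,\dots,s_n)$ and goals $\mathcal{G}=(g_1,\dots,g_n)$ are tuples of pairwise distinct vertices. A configuration is $Q\in V^n$, $Q[i]$ being the location of agent $i$. Configurations $X,Y$ are *connected* if $Y[i]\in N(X[i])\cup\{X[i]\}$ for all $i$, there is no $i\ne j$ with $Y[i]=Y[j]$ or $X[i]=X[j]$ (no vertex collision), and there is no $i\neq j$ with $X[i]=Y[j]$ and $Y[i]=X[j]$ (no edge collision). A *solution* is a sequence $\Pi=(Q_0,\dots,Q_k)$ with $Q_0=\mathcal{S}$, $Q_k=\mathcal{G}$ and $Q_t,Q_{t+1}$ connected for all $t$. Given a transition cost $c_e:V^n\times V^n\to\mathbb{R}_{\ge0}$, the cost of $\Pi$ is $c(\Pi)=\sum_{t=0}^{k-1}c_e(Q_t,Q_{t+1})$. A heuristic $h:V^n\to\mathbb{R}_{\ge 0}$ is *admissible* if $h(Q)$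 is at most the minimum cost of a sequence of consecutively connected configurations from $Q$ to $\mathcal{G}$ (for every $Q$ from which $\mathcal{G}$ is reachable; in particular $h(\mathcal{G})=0$). **Constraints.** A constraint node $C$ is either the root $C_{\mathrm{init}}$ or a triple $\langle \mathrm{parent}:C',\ \mathrm{who}:i,\ \mathrm{where}:u\rangle$ with $C'$ a constraint node, $i\in A$, $u\in V$. The constraint set of $C$ is the set of pairs $(i,u)$ collected along the parent chain to the root; $\mathrm{depth}(C)$ is its size ($\mathrm{depth}(C_{\mathrm{init}})=0$). **Ingredients.** An *agent-ordering rule* assigns to each generated high-level node an arbitrary permutation $\mathrm{order}$ of $A$. A *valid configuration generator* is a function that, given a configuration $Q$ and a constraint node $C$, returns either $\bot$ or a configuration $Q'$ connected to $Q$ with $Q'[i]=u$ for all $(i,u)$ in the constraint set of $C$; moreover, whenever the constraint set of $C$ assigns a location to every agent and the resulting configuration is connected to $Q$, it does not return $\bot$ (hence returns exactly that configuration). **High-level nodes.** A node $\mathcal{N}$ stores: $\mathrm{config}$ (a configuration), $\mathrm{tree}$ (a FIFO queue of constraint nodes), $\mathrm{parent}$ (a node or $\bot$), $\mathrm{neighbors}$ (a list of nodes), $g\in\mathbb{R}_{\ge0}$, and $\mathrm{order}$. Write $f(\mathcal{N})=\mathcal{N}.g+h(\mathcal{N}.\mathrm{config})$ and $c_e(\mathcal{N},\mathcal{N}')=c_e(\mathcal{N}.\mathrm{config},\mathcal{N}'.\mathrm{config})$. **Algorithm LaCAM$^\ast$.** OPEN is a stack (LIFO), EXPLORED a map from configurations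 to nodes, $\mathcal{N}_{\mathrm{goal}}:=\bot$. Create $\mathcal{N}_{\mathrm{init}}$ with config $\mathcal{S}$, tree $[C_{\mathrm{init}}]$, parent $\bot$, neighbors $\emptyset$, $g=0$; push it on OPEN and set EXPLORED$[\mathcal{S}]=\mathcal{N}_{\mathrm{init}}$. While OPEN is nonempty: 1. Let $\mathcal{N}$ be the top of OPEN (not removed). If $\mathcal{N}.\mathrm{config}=\mathcal{G}$, set $\mathcal{N}_{\mathrm{goal}}:=\mathcal{N}$. 2. If $\mathcal{N}_{\mathrm{goal}}\ne\bot$ and $f(\mathcal{N}_{\mathrm{goal}})\le f(\mathcal{N})$, pop OPEN and continue. 3. If $\mathcal{N}.\mathrm{tree}$ is empty, pop OPEN and continue. 4. Dequeue $C$ from $\mathcal{N}.\mathrm{tree}$. If $\mathrm{depth}(C)<n$, let $i=\mathcal{N}.\mathrm{order}[\mathrm{depth}(C)+1]$ and, for each $u\in N(\mathcal{N}.\mathrm{config}[i])\cup\{\mathcal{N}.\mathrm{config}[i]\}$, enqueue $\langle C,i,u\rangle$ into $\mathcal{N}.\mathrm{tree}$. 5. Let $Q_{\mathrm{new}}$ be the generator's output on $(\mathcal{N}.\mathrm{config},C)$; if $\bot$, continue. 6. If EXPLORED$[Q_{\mathrm{new}}]$ is defined: append it to $\mathcal{N}.\mathrm{neighbors}$; then run a Dijkstra update: $D$ is a min-priority queue on $g$ initialized with $\mathcal{N}$; while $D\ne\emptyset$, pop $\mathcal{N}_{\mathrm{from}}$ and for each $\mathcal{N}_{\mathrm{to}}\in\mathcal{N}_{\mathrm{from}}.\mathrm{neighbors}$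 let $g'=\mathcal{N}_{\mathrm{from}}.g+c_e(\mathcal{N}_{\mathrm{from}},\mathcal{N}_{\mathrm{to}})$; if $g'<\mathcal{N}_{\mathrm{to}}.g$, set $\mathcal{N}_{\mathrm{to}}.g:=g'$, $\mathcal{N}_{\mathrm{to}}.\mathrm{parent}:=\mathcal{N}_{\mathrm{from}}$, push $\mathcal{N}_{\mathrm{to}}$ into $D$, and if moreover $\mathcal{N}_{\mathrm{goal}}\neq\bot$ and $f(\mathcal{N}_{\mathrm{to}})<f(\mathcal{N}_{\mathrm{goal}})$, push $\mathcal{N}_{\mathrm{to}}$ onto OPEN. 7. Otherwise create $\mathcal{N}_{\mathrm{new}}$ with config $Q_{\mathrm{new}}$, tree $[C_{\mathrm{init}}]$, parent $\mathcal{N}$, neighbors $\emptyset$, $g=\mathcal{N}.g+c_e(\mathcal{N}.\mathrm{config},Q_{\mathrm{new}})$, order given by the ordering rule; push it on OPEN, set EXPLORED$[Q_{\mathrm{new}}]=\mathcal{N}_{\mathrm{new}}$, and append $\mathcal{N}_{\mathrm{new}}$ to $\mathcal{N}.\mathrm{neighbors}$. When OPEN is empty: if $\mathcal{N}_{\mathrm{goal}}\ne\bot$, return the sequence of configurations obtained by following parent pointers from $\mathcal{N}_{\mathrm{goal}}$ back to $\mathcal{N}_{\mathrm{init}}$, reversed; otherwise return NO_SOLUTION. *)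

theory Defs
  imports Complex_Main
begin

(* Agents are 0..n-1 (paper: 1..n); configurations are lists of length n;
   the vertex set V is the (finite) type 'v; adj is the (symmetric) edge relation,
   N(v) = {u. adj v u}.  A constraint node is represented by the list of pairs
   (who, where) along its chain from the root (root = []), so its depth is the length. *)

type_synonym 'v config = "'v list"
type_synonym 'v constr = "(nat \<times> 'v) list"

definition connected :: "nat \<Rightarrow> ('v \<Rightarrow> 'v \<Rightarrow> bool) \<Rightarrow> 'v config \<Rightarrow> 'v config \<Rightarrow> bool" where
  "connected n adj X Y \<longleftrightarrow> length X = n \<and> length Y = n \<and>
     (\<forall>i<n. Y!i \<in> {u. adj (X!i) u} \<union> {X!i}) \<and>
     (\<forall>i<n. \<forall>j<n. i \<noteq> j \<longrightarrow> Y!i \<noteq> Y!j \<and> X!i \<noteq> X!j) \<and>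
     (\<forall>i<n. \<forall>j<n. i \<noteq> j \<longrightarrow> \<not> (X!i = Y!j \<and> Y!i = X!j))"

definition is_path :: "nat \<Rightarrow> ('v \<Rightarrow> 'v \<Rightarrow> bool) \<Rightarrow> 'v config list \<Rightarrow> bool" where
  "is_path n adj P \<longleftrightarrow> P \<noteq> [] \<and> (\<forall>t. Suc t < length P \<longrightarrow> connected n adj (P!t) (P!Suc t))"

definition is_solution :: "nat \<Rightarrow> ('v \<Rightarrow> 'v \<Rightarrow> bool) \<Rightarrow> 'v config \<Rightarrow> 'v config \<Rightarrow> 'v config list \<Rightarrow> bool" where
  "is_solution n adj S G P \<longleftrightarrow> is_path n adj P \<and> hd P = S \<and> last P = G"

definition path_cost :: "('v config \<Rightarrow> 'v config \<Rightarrow> real) \<Rightarrow> 'v config list \<Rightarrow> real" where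
  "path_cost c P = (\<Sum>t<length P - 1. c (P!t) (P!Suc t))"

definition admissible :: "nat \<Rightarrow> ('v \<Rightarrow> 'v \<Rightarrow> bool) \<Rightarrow> 'v config \<Rightarrow> ('v config \<Rightarrow> 'v config \<Rightarrow> real) \<Rightarrow> ('v config \<Rightarrow> real) \<Rightarrow> bool" where
  "admissible n adj G c h \<longleftrightarrow>
     (\<forall>Q P. is_path n adj P \<and> hd P = Q \<and> last P = G \<longrightarrow> h Q \<le> path_cost c P)"

definition valid_generator :: "nat \<Rightarrow> ('v \<Rightarrow> 'v \<Rightarrow> bool) \<Rightarrow> ('v config \<Rightarrow> 'v constr \<Rightarrow> 'v config option) \<Rightarrow> bool" where
  "valid_generator n adj gen \<longleftrightarrow>
     (\<forall>Q C Q'. length Q = n \<longrightarrow> (\<forall>(i,u)\<in>set C. i < n) \<longrightarrow> gen Q C = Some Q' \<longrightarrow>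
        connected n adj Q Q' \<and> (\<forall>(i,u)\<in>set C. Q'!i = u)) \<and>
     (\<forall>Q C Q'. length Q = n \<longrightarrow> (\<forall>(i,u)\<in>set C. i < n) \<longrightarrow> (\<forall>i<n. \<exists>u. (i,u) \<in> set C) \<longrightarrow>
        connected n adj Q Q' \<longrightarrow> (\<forall>(i,u)\<in>set C. Q'!i = u) \<longrightarrow> gen Q C \<noteq> None)"

(* High-level nodes; a node is identified with its configuration (EXPLORED is injective). *)
record 'v hnode =
  tree :: "'v constr list"          (* FIFO queue: dequeue at head, enqueue at end *)
  par :: "'v config option"
  nbrs :: "'v config list"
  gval :: real
  ordr :: "nat list"                (* order[k+1] of the paper is ordr ! k *)

(* Algorithm state: EXPLORED (with node data), OPEN (stack, top = head), N_goal,
   and the state of the Dijkstra update loop (flag + priority queue of (node, key)). *)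
record 'v lstate =
  nodes :: "'v config \<Rightarrow> 'v hnode option"
  opn :: "'v config list"
  goal :: "'v config option"
  in_dijk :: bool
  dq :: "('v config \<times> real) list"

definition gof :: "'v lstate \<Rightarrow> 'v config \<Rightarrow> real" where
  "gof s q = gval (the (nodes s q))"

definition fof :: "('v config \<Rightarrow> real) \<Rightarrow> 'v lstate \<Rightarrow> 'v config \<Rightarrow> real" where
  "fof h s q = gof s q + h q"

(* the body of the Dijkstra loop for one popped node N_from, processing its
   neighbor list in order *)
fun relax :: "('v config \<Rightarrow> 'v config \<Rightarrow> real) \<Rightarrow> ('v config \<Rightarrow> real) \<Rightarrow> 'v config
              \<Rightarrow> 'v config list \<Rightarrow> 'v lstate \<Rightarrow> 'v lstate" where
  "relax c h fr [] s = s"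
| "relax c h fr (t # ts) s =
     relax c h fr ts
       (let g' = gof s fr + c fr t in
        if g' < gof s t then
          (let s1 = s\<lparr>nodes := (nodes s)(t \<mapsto> (the (nodes s t))\<lparr>gval := g', par := Some fr\<rparr>),
                      dq := (t, g') # dq s\<rparr>
           in if (\<exists>qg. goal s1 = Some qg \<and> fof h s1 t < fof h s1 qg)
              then s1\<lparr>opn := t # opn s1\<rparr> else s1)
        else s)"

definition init_state :: "'v config \<Rightarrow> nat list \<Rightarrow> 'v lstate" where
  "init_state S o0 = \<lparr>nodes = [S \<mapsto> \<lparr>tree = [[]], par = None, nbrs = [], gval = 0, ordr = o0\<rparr>],
                      opn = [S], goal = None, in_dijk = False, dq = []\<rparr>"

definition expand_tree :: "nat \<Rightarrow> ('v \<Rightarrow> 'v \<Rightarrow> bool) \<Rightarrow> 'v config \<Rightarrow> nat list \<Rightarrow> 'v constr \<Rightarrow> 'v list \<Rightarrow> bool" where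
  "expand_tree n adj q ord C us \<longleftrightarrow>
     (length C < n \<longrightarrow> distinct us \<and> set us = {u. adj (q ! (ord ! length C)) u} \<union> {q ! (ord ! length C)})"

definition new_children :: "nat \<Rightarrow> nat list \<Rightarrow> 'v constr \<Rightarrow> 'v list \<Rightarrow> 'v constr list" where
  "new_children n ord C us = (if length C < n then map (\<lambda>u. C @ [(ord ! length C, u)]) us else [])"

(* One iteration (main loop iteration up to the call of the Dijkstra update, or one
   pop of the Dijkstra priority queue). Nondeterminism: enumeration order of
   neighbours, ordering rule, tie-breaking in the priority queue. *)
inductive lstep :: "nat \<Rightarrow> ('v \<Rightarrow> 'v \<Rightarrow> bool) \<Rightarrow> 'v config \<Rightarrow> ('v config \<Rightarrow> 'v config \<Rightarrow> real)
                   \<Rightarrow> ('v config \<Rightarrow> real) \<Rightarrow> ('v config \<Rightarrow> 'v constr \<Rightarrow> 'v config option)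
                   \<Rightarrow> 'v lstate \<Rightarrow> 'v lstate \<Rightarrow> bool"
  for n adj G c h gen where
  pop_goal:
    "\<lbrakk> \<not> in_dijk s; opn s = q # rest;
       gl = (if q = G then Some q else goal s);
       gl = Some qg; fof h s qg \<le> fof h s q \<rbrakk>
     \<Longrightarrow> lstep n adj G c h gen s (s\<lparr>opn := rest, goal := gl\<rparr>)"
| pop_empty:
    "\<lbrakk> \<not> in_dijk s; opn s = q # rest;
       gl = (if q = G then Some q else goal s);
       \<not> (\<exists>qg. gl = Some qg \<and> fof h s qg \<le> fof h s q);
       tree (the (nodes s q)) = [] \<rbrakk>
     \<Longrightarrow> lstep n adj G c h gen s (s\<lparr>opn := rest, goal := gl\<rparr>)"
| gen_none:
    "\<lbrakk> \<not> in_dijk s; opn s = q # rest;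
       gl = (if q = G then Some q else goal s);
       \<not> (\<exists>qg. gl = Some qg \<and> fof h s qg \<le> fof h s q);
       nd = the (nodes s q); tree nd = C # Cs;
       expand_tree n adj q (ordr nd) C us;
       gen q C = None \<rbrakk>
     \<Longrightarrow> lstep n adj G c h gen s
          (s\<lparr>goal := gl, nodes := (nodes s)(q \<mapsto> nd\<lparr>tree := Cs @ new_children n (ordr nd) C us\<rparr>)\<rparr>)"
| gen_explored:
    "\<lbrakk> \<not> in_dijk s; opn s = q # rest;
       gl = (if q = G then Some q else goal s);
       \<not> (\<exists>qg. gl = Some qg \<and> fof h s qg \<le> fof h s q);
       nd = the (nodes s q); tree nd = C # Cs;
       expand_tree n adj q (ordr nd) C us;
       gen q C = Some Q'; nodes s Q' \<noteq> None \<rbrakk>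
     \<Longrightarrow> lstep n adj G c h gen s
          (s\<lparr>goal := gl,
             nodes := (nodes s)(q \<mapsto> nd\<lparr>tree := Cs @ new_children n (ordr nd) C us,
                                        nbrs := nbrs nd @ [Q']\<rparr>),
             in_dijk := True, dq := [(q, gval nd)]\<rparr>)"
| gen_new:
    "\<lbrakk> \<not> in_dijk s; opn s = q # rest;
       gl = (if q = G then Some q else goal s);
       \<not> (\<exists>qg. gl = Some qg \<and> fof h s qg \<le> fof h s q);
       nd = the (nodes s q); tree nd = C # Cs;
       expand_tree n adj q (ordr nd) C us;
       gen q C = Some Q'; nodes s Q' = None;
       distinct o'; set o' = {..<n} \<rbrakk>
     \<Longrightarrow> lstep n adj G c h gen s
          (s\<lparr>goal := gl,
             nodes := ((nodes s)(q \<mapsto> nd\<lparr>tree := Cs @ new_children n (ordr nd) C us,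
                                         nbrs := nbrs nd @ [Q']\<rparr>))
                      (Q' \<mapsto> \<lparr>tree = [[]], par = Some q, nbrs = [],
                              gval = gval nd + c q Q', ordr = o'\<rparr>),
             opn := Q' # opn s\<rparr>)"
| dijk_pop:
    "\<lbrakk> in_dijk s; (q, k) \<in> set (dq s); \<forall>(q', k') \<in> set (dq s). k \<le> k' \<rbrakk>
     \<Longrightarrow> lstep n adj G c h gen s
          (relax c h q (nbrs (the (nodes s q))) (s\<lparr>dq := remove1 (q, k) (dq s)\<rparr>))"
| dijk_end:
    "\<lbrakk> in_dijk s; dq s = [] \<rbrakk> \<Longrightarrow> lstep n adj G c h gen s (s\<lparr>in_dijk := False\<rparr>)"

definition is_final :: "'v lstate \<Rightarrow> bool" where
  "is_final s \<longleftrightarrow> \<not> in_dijk s \<and> opn s = []"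

definition returned_path :: "'v lstate \<Rightarrow> 'v config list \<Rightarrow> bool" where
  "returned_path s P \<longleftrightarrow> P \<noteq> [] \<and> goal s = Some (last P) \<and>
     nodes s (hd P) \<noteq> None \<and> par (the (nodes s (hd P))) = None \<and>
     (\<forall>t. Suc t < length P \<longrightarrow> nodes s (P ! Suc t) \<noteq> None \<and>
                                  par (the (nodes s (P ! Suc t))) = Some (P ! t))"

end

theory Submission
  imports Defs
begin


locale lac =
  fixes adj :: "'v::finite \<Rightarrow> 'v \<Rightarrow> bool" and n :: nat and S G :: "'v list"
    and c :: "'v list \<Rightarrow> 'v list \<Rightarrow> real" and h :: "'v list \<Rightarrow> real"
    and gen :: "'v list \<Rightarrow> (nat \<times> 'v) list \<Rightarrow> 'v list option"
  assumes lenS: "length S = n" and lenG: "length G = n"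
    and c_nn: "\<forall>X Y. length X = n \<longrightarrow> length Y = n \<longrightarrow> c X Y \<ge> 0"
    and h_nn: "\<forall>Q. length Q = n \<longrightarrow> h Q \<ge> 0"
    and adm: "admissible n adj G c h"
    and vg: "valid_generator n adj gen"
begin

definition Epos where "Epos = {(X,Y). length X = n \<and> length Y = n \<and> c X Y > 0}"
definition W where "W = {sum_list (map (case_prod c) es) | es. set es \<subseteq> Epos}"

lemma W0: "0 \<in> W" unfolding W_def by (rule CollectI, rule exI[of _ "[]"]) simp

lemma W_add: assumes "v \<in> W" "length X = n" "length Y = n" shows "v + c X Y \<in> W"
proof (cases "c X Y = 0")
  case True then show ?thesis using assms by simp
next
  case False
  then have "c X Y > 0" using c_nn assms by force
  then have e: "(X,Y) \<in> Epos" using assms unfolding Epos_def by auto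
  from assms(1) obtain es where es: "v = sum_list (map (case_prod c) es)" "set es \<subseteq> Epos"
    unfolding W_def by auto
  show ?thesis unfolding W_def
    by (rule CollectI, rule exI[of _ "es @ [(X,Y)]"]) (use es e in auto)
qed

lemma W_nn: "v \<in> W \<Longrightarrow> v \<ge> 0"
  unfolding W_def Epos_def by (auto intro!: sum_list_nonneg) (fastforce)

lemma finite_len: "finite {xs :: 'v list. length xs = n}"
  using finite_lists_length_eq[of "UNIV :: 'v set" n] by simp

lemma finite_Epos: "finite Epos"
proof -
  have "Epos \<subseteq> {xs :: 'v list. length xs = n} \<times> {xs. length xs = n}" unfolding Epos_def by auto
  then show ?thesis using finite_len finite_subset by blast
qed

lemma W_fin: "finite {v\<in>W. v < B}"
proof -
  define eps where "eps = (if Epos = {} then 1 else Min (case_prod c ` Epos))"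
  have eps_pos: "eps > 0"
  proof (cases "Epos = {}")
    case False
    then show ?thesis unfolding eps_def using finite_Epos
      by (auto simp: Epos_def)
  qed (simp add: eps_def)
  have eps_le: "\<And>e. e \<in> Epos \<Longrightarrow> eps \<le> case_prod c e"
    unfolding eps_def using finite_Epos by auto
  have lb: "set es \<subseteq> Epos \<Longrightarrow> real (length es) * eps \<le> sum_list (map (case_prod c) es)" for es
  proof (induction es)
    case (Cons e es)
    then show ?case using eps_le[of e] by (simp add: algebra_simps)
  qed simp
  define N where "N = nat \<lceil>B / eps\<rceil>"
  have "{v\<in>W. v < B} \<subseteq> (\<lambda>es. sum_list (map (case_prod c) es)) ` {es. set es \<subseteq> Epos \<and> length es \<le> N}"
  proof
    fix v assume "v \<in> {v\<in>W. v < B}"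
    then obtain es where es: "v = sum_list (map (case_prod c) es)" "set es \<subseteq> Epos" "v < B"
      unfolding W_def by auto
    have "real (length es) * eps < B" using lb[OF es(2)] es by simp
    then have "real (length es) < B / eps" using eps_pos by (simp add: field_simps)
    then have "length es \<le> N" unfolding N_def by linarith
    then show "v \<in> (\<lambda>es. sum_list (map (case_prod c) es)) ` {es. set es \<subseteq> Epos \<and> length es \<le> N}"
      using es by auto
  qed
  then show ?thesis using finite_lists_length_le[OF finite_Epos] finite_subset by blast
qed

abbreviation nd :: "'v lstate \<Rightarrow> 'v config \<Rightarrow> 'v hnode" where "nd s x \<equiv> the (nodes s x)"

definition parrel :: "'v lstate \<Rightarrow> ('v config \<times> 'v config) set" where
  "parrel s = {(p,x). x \<in> dom (nodes s) \<and> par (nd s x) = Some p}"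

definition "I_len s \<longleftrightarrow> (\<forall>x\<in>dom (nodes s). length x = n)"
definition "I_S s \<longleftrightarrow> S \<in> dom (nodes s) \<and> par (nd s S) = None \<and> gof s S = 0"
definition "I_opn s \<longleftrightarrow> set (opn s) \<subseteq> dom (nodes s)"
definition "I_dq s \<longleftrightarrow> fst ` set (dq s) \<subseteq> dom (nodes s)"
definition "I_nbrs s \<longleftrightarrow> (\<forall>x\<in>dom (nodes s). \<forall>y\<in>set (nbrs (nd s x)). y \<in> dom (nodes s) \<and> connected n adj x y)"
definition "I_par s \<longleftrightarrow> (\<forall>x\<in>dom (nodes s). \<forall>p. par (nd s x) = Some p \<longrightarrow>
        p \<in> dom (nodes s) \<and> connected n adj p x \<and> gof s p + c p x \<le> gof s x)"
definition "I_root s \<longleftrightarrow> (\<forall>x\<in>dom (nodes s). par (nd s x) = None \<longrightarrow> x = S)"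
definition "I_W s \<longleftrightarrow> (\<forall>x\<in>dom (nodes s). gof s x \<in> W)"
definition "I_acyc s \<longleftrightarrow> acyclic (parrel s)"
definition "I_goal s \<longleftrightarrow> (goal s = None \<or> (goal s = Some G \<and> G \<in> dom (nodes s)))"
definition "I_G s \<longleftrightarrow> (G \<in> dom (nodes s) \<longrightarrow> G \<notin> set (opn s) \<longrightarrow> goal s \<noteq> None)"
definition "I_exp s \<longleftrightarrow> (\<forall>x\<in>dom (nodes s). x \<notin> set (opn s) \<longrightarrow> tree (nd s x) = [] \<or>
        (\<exists>qg. goal s = Some qg \<and> fof h s qg \<le> fof h s x))"
definition "I_ord s \<longleftrightarrow> (\<forall>x\<in>dom (nodes s). distinct (ordr (nd s x)) \<and> set (ordr (nd s x)) = {..<n})"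
definition "I_tree s \<longleftrightarrow> (\<forall>x\<in>dom (nodes s). \<forall>C\<in>set (tree (nd s x)). length C \<le> n \<and>
        (\<forall>j<length C. fst (C!j) = ordr (nd s x) ! j))"
definition "I_compl s \<longleftrightarrow> (\<forall>x\<in>dom (nodes s). \<forall>Y. connected n adj x Y \<longrightarrow> Y \<in> set (nbrs (nd s x)) \<or>
        (\<exists>C\<in>set (tree (nd s x)). length C \<le> n \<and>
            (\<forall>j<length C. C!j = (ordr (nd s x) ! j, Y ! (ordr (nd s x) ! j)))))"

definition inv_base :: "'v lstate \<Rightarrow> bool" where
  "inv_base s \<longleftrightarrow> I_len s \<and> I_S s \<and> I_opn s \<and> I_dq s \<and> I_nbrs s \<and> I_par s \<and> I_root s \<and>
     I_W s \<and> I_acyc s \<and> I_goal s \<and> I_G s \<and> I_exp s \<and> I_ord s \<and> I_tree s \<and> I_compl s"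

definition Lc :: "'v lstate \<Rightarrow> 'v config \<Rightarrow> 'v config set \<Rightarrow> bool" where
  "Lc s fr T \<longleftrightarrow> (\<forall>x\<in>dom (nodes s). \<forall>y\<in>set (nbrs (nd s x)).
      gof s y \<le> gof s x + c x y \<or> x \<in> fst ` set (dq s) \<or> (x = fr \<and> y \<in> T))"

definition inv :: "'v lstate \<Rightarrow> bool" where
  "inv s \<longleftrightarrow> inv_base s \<and> (\<forall>x\<in>dom (nodes s). \<forall>y\<in>set (nbrs (nd s x)).
      gof s y \<le> gof s x + c x y \<or> (in_dijk s \<and> x \<in> fst ` set (dq s)))"

lemma parrel_mono:
  assumes "inv_base s" "(a,b) \<in> (parrel s)\<^sup>*" shows "gof s a \<le> gof s b"
  using assms(2)
proof (induction rule: rtrancl_induct)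
  case (step y z)
  then have z: "z \<in> dom (nodes s)" "par (nd s z) = Some y" unfolding parrel_def by auto
  with assms(1) have "y \<in> dom (nodes s)" "gof s y + c y z \<le> gof s z"
    unfolding inv_base_def I_par_def by blast+
  moreover have "c y z \<ge> 0" using c_nn assms(1) z(1) \<open>y \<in> dom (nodes s)\<close>
    unfolding inv_base_def I_len_def by blast
  ultimately show ?case using step by linarith
qed simp

definition rstep :: "'v config \<Rightarrow> 'v config \<Rightarrow> 'v lstate \<Rightarrow> 'v lstate" where
  "rstep fr t s = (let g' = gof s fr + c fr t in
        if g' < gof s t then
          (let s1 = s\<lparr>nodes := (nodes s)(t \<mapsto> (the (nodes s t))\<lparr>gval := g', par := Some fr\<rparr>),
                      dq := (t, g') # dq s\<rparr>
           in if (\<exists>qg. goal s1 = Some qg \<and> fof h s1 t < fof h s1 qg)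
              then s1\<lparr>opn := t # opn s1\<rparr> else s1)
        else s)"

lemma relax_Cons: "relax c h fr (t#ts) s = relax c h fr ts (rstep fr t s)"
  by (simp add: rstep_def)

end



context lac begin

lemma rstep_no: "\<not> (gof s fr + c fr t < gof s t) \<Longrightarrow> rstep fr t s = s"
  by (simp add: rstep_def)

lemma rstep_yes:
  assumes "gof s fr + c fr t < gof s t"
  defines "s1 \<equiv> s\<lparr>nodes := (nodes s)(t \<mapsto> (nd s t)\<lparr>gval := gof s fr + c fr t, par := Some fr\<rparr>),
                      dq := (t, gof s fr + c fr t) # dq s\<rparr>"
  shows "rstep fr t s = (if (\<exists>qg. goal s = Some qg \<and> fof h s1 t < fof h s1 qg)
              then s1\<lparr>opn := t # opn s\<rparr> else s1)"
  using assms by (simp add: rstep_def Let_def)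

lemma rstep_same:
  assumes "t \<in> dom (nodes s)"
  shows "dom (nodes (rstep fr t s)) = dom (nodes s)"
    "\<And>x. nbrs (nd (rstep fr t s) x) = nbrs (nd s x)"
    "\<And>x. tree (nd (rstep fr t s) x) = tree (nd s x)"
    "\<And>x. ordr (nd (rstep fr t s) x) = ordr (nd s x)"
    "goal (rstep fr t s) = goal s" "in_dijk (rstep fr t s) = in_dijk s"
    "set (opn s) \<subseteq> set (opn (rstep fr t s))"
  using assms by (auto simp: rstep_def Let_def)

definition Phi :: "'v lstate \<Rightarrow> nat" where
  "Phi s = (\<Sum>x\<in>dom (nodes s). card {v\<in>W. v < gof s x})"

lemma inv_base_fin: "inv_base s \<Longrightarrow> finite (dom (nodes s))"
  unfolding inv_base_def I_len_def using finite_len finite_subset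
  by (metis (mono_tags, lifting) mem_Collect_eq subsetI)

lemma rstep_inv:
  assumes I: "inv_base s" and fr: "fr \<in> dom (nodes s)" and t: "t \<in> set (nbrs (nd s fr))"
    and L: "Lc s fr (insert t T)"
  shows "inv_base (rstep fr t s) \<and> Lc (rstep fr t s) fr T \<and>
         (rstep fr t s = s \<or> Phi (rstep fr t s) < Phi s)"
proof (cases "gof s fr + c fr t < gof s t")
  case False
  then have e: "rstep fr t s = s" by (rule rstep_no)
  have "Lc s fr T" using L False unfolding Lc_def by force
  then show ?thesis using e I by simp
next
  case True
  note defs = I_len_def I_S_def I_opn_def I_dq_def I_nbrs_def I_par_def I_root_def I_W_def
    I_acyc_def I_goal_def I_G_def I_exp_def I_ord_def I_tree_def I_compl_def
  have Il: "I_len s" and IS: "I_S s" and Io: "I_opn s" and Id: "I_dq s" and In: "I_nbrs s"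
    and Ip: "I_par s" and Ir: "I_root s" and IW: "I_W s" and Ia: "I_acyc s" and Ig: "I_goal s"
    and IG: "I_G s" and Ie: "I_exp s" and Iord: "I_ord s" and It: "I_tree s" and Ic: "I_compl s"
    using I unfolding inv_base_def by auto
  define g' where "g' = gof s fr + c fr t"
  define N' where "N' = (nd s t)\<lparr>gval := g', par := Some fr\<rparr>"
  define s1 where "s1 = s\<lparr>nodes := (nodes s)(t \<mapsto> N'), dq := (t, g') # dq s\<rparr>"
  define s' where "s' = rstep fr t s"
  have s'eq: "s' = (if (\<exists>qg. goal s = Some qg \<and> fof h s1 t < fof h s1 qg)
              then s1\<lparr>opn := t # opn s\<rparr> else s1)"
    unfolding s'_def s1_def N'_def g'_def by (rule rstep_yes[OF True])
  have tdom: "t \<in> dom (nodes s)" and con: "connected n adj fr t" using In fr t unfolding I_nbrs_def by auto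
  have lfr: "length fr = n" and lt: "length t = n" using Il fr tdom unfolding I_len_def by auto
  have cnn: "c fr t \<ge> 0" using c_nn lfr lt by auto
  have gfr: "gof s fr \<in> W" using IW fr unfolding I_W_def by auto
  have glt: "g' < gof s t" using True g'_def by simp
  have tfr: "t \<noteq> fr" using glt cnn g'_def by auto
  have g'nn: "g' \<ge> 0" using W_nn[OF gfr] cnn g'_def by simp
  have tS: "t \<noteq> S" using IS glt g'nn unfolding I_S_def by auto
  have nodes': "nodes s' = (nodes s)(t \<mapsto> N')" using s'eq s1_def by simp
  have dq': "dq s' = (t, g') # dq s" using s'eq s1_def by simp
  have goal': "goal s' = goal s" and dij': "in_dijk s' = in_dijk s" using s'eq s1_def by auto
  have opn': "set (opn s) \<subseteq> set (opn s')" using s'eq s1_def by auto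
  have dom': "dom (nodes s') = dom (nodes s)" using nodes' tdom by auto
  have nd': "\<And>x. nd s' x = (if x = t then N' else nd s x)" using nodes' by simp
  have gof': "\<And>x. gof s' x = (if x = t then g' else gof s x)" using nd' unfolding gof_def N'_def by simp
  have fof1: "fof h s1 = fof h s'" unfolding fof_def gof_def using nodes' s1_def by auto
  have push: "t \<notin> set (opn s') \<Longrightarrow> \<not> (\<exists>qg. goal s = Some qg \<and> fof h s' t < fof h s' qg)"
  proof
    assume a: "t \<notin> set (opn s')" and b: "\<exists>qg. goal s = Some qg \<and> fof h s' t < fof h s' qg"
    have "\<exists>qg. goal s = Some qg \<and> fof h s1 t < fof h s1 qg" using b unfolding fof1 .
    then have "s' = s1\<lparr>opn := t # opn s\<rparr>" using s'eq by (simp only: if_True)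
    then show False using a by simp
  qed
  have fld: "\<And>x. nbrs (nd s' x) = nbrs (nd s x)" "\<And>x. tree (nd s' x) = tree (nd s x)"
    "\<And>x. ordr (nd s' x) = ordr (nd s x)" using nd' N'_def by auto
  have parr: "\<And>x. par (nd s' x) = (if x = t then Some fr else par (nd s x))" using nd' N'_def by auto
  have gle: "\<And>x. gof s' x \<le> gof s x" using gof' glt by auto
  have "I_len s'" using Il dom' unfolding I_len_def by simp
  moreover have "I_S s'" using IS dom' tS nd' gof' unfolding I_S_def by simp
  moreover have "I_opn s'" using Io dom' s'eq s1_def tdom unfolding I_opn_def by auto
  moreover have "I_dq s'" using Id dom' dq' tdom unfolding I_dq_def by auto
  moreover have "I_nbrs s'" using In dom' fld unfolding I_nbrs_def by simp
  moreover have "I_par s'"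
    unfolding I_par_def
  proof (intro ballI allI impI)
    fix x p assume x: "x \<in> dom (nodes s')" and p: "par (nd s' x) = Some p"
    show "p \<in> dom (nodes s') \<and> connected n adj p x \<and> gof s' p + c p x \<le> gof s' x"
    proof (cases "x = t")
      case True
      then show ?thesis using p parr fr con dom' gof' tfr g'_def by auto
    next
      case False
      then have "par (nd s x) = Some p" using p parr by simp
      then have "p \<in> dom (nodes s) \<and> connected n adj p x \<and> gof s p + c p x \<le> gof s x"
        using Ip x dom' unfolding I_par_def by auto
      then show ?thesis using dom' gof' False gle[of p] by auto
    qed
  qed
  moreover have "I_root s'" using Ir dom' parr unfolding I_root_def by auto
  moreover have "I_W s'" using IW dom' gof' W_add[OF gfr lfr lt] g'_def unfolding I_W_def by auto
  moreover have "I_acyc s'"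
  proof -
    have sub: "parrel s' \<subseteq> insert (fr, t) (parrel s)"
      unfolding parrel_def using dom' parr by auto
    have "(t, fr) \<notin> (parrel s)\<^sup>*"
    proof
      assume "(t, fr) \<in> (parrel s)\<^sup>*"
      then have "gof s t \<le> gof s fr" using parrel_mono I by blast
      then show False using glt cnn g'_def by simp
    qed
    then have "acyclic (insert (fr, t) (parrel s))" using Ia unfolding I_acyc_def by simp
    then show ?thesis unfolding I_acyc_def using acyclic_subset sub by blast
  qed
  moreover have "I_goal s'" using Ig goal' dom' unfolding I_goal_def by simp
  moreover have "I_G s'" using IG goal' dom' opn' unfolding I_G_def by auto
  moreover have "I_exp s'"
    unfolding I_exp_def
  proof (intro ballI impI)
    fix x assume x: "x \<in> dom (nodes s')" and xo: "x \<notin> set (opn s')"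
    then have xo': "x \<notin> set (opn s)" using opn' by auto
    have fle: "\<And>y. fof h s' y \<le> fof h s y" using gle unfolding fof_def by (simp add: add_mono)
    from Ie x xo' dom' have old: "tree (nd s x) = [] \<or> (\<exists>qg. goal s = Some qg \<and> fof h s qg \<le> fof h s x)"
      unfolding I_exp_def by auto
    show "tree (nd s' x) = [] \<or> (\<exists>qg. goal s' = Some qg \<and> fof h s' qg \<le> fof h s' x)"
    proof (cases "x = t")
      case True
      then show ?thesis using old push xo goal' fld by (auto simp: not_less)
    next
      case False
      then have fx: "fof h s' x = fof h s x" using gof' unfolding fof_def by simp
      then show ?thesis using old fld fx fle goal' by (metis order_trans)
    qed
  qed
  moreover have "I_ord s'" using Iord dom' fld unfolding I_ord_def by simp
  moreover have "I_tree s'" using It dom' fld unfolding I_tree_def by simp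
  moreover have "I_compl s'" using Ic dom' fld unfolding I_compl_def by simp
  ultimately have inv': "inv_base s'" unfolding inv_base_def by blast
  have Lc': "Lc s' fr T"
    unfolding Lc_def
  proof (intro ballI)
    fix x y assume x: "x \<in> dom (nodes s')" and y: "y \<in> set (nbrs (nd s' x))"
    show "gof s' y \<le> gof s' x + c x y \<or> x \<in> fst ` set (dq s') \<or> (x = fr \<and> y \<in> T)"
    proof (cases "x = fr \<and> y = t")
      case True
      then show ?thesis using gof' tfr g'_def by auto
    next
      case False
      have "gof s y \<le> gof s x + c x y \<or> x \<in> fst ` set (dq s) \<or> (x = fr \<and> y \<in> insert t T)"
        using L x y dom' fld unfolding Lc_def by auto
      then show ?thesis
      proof (elim disjE)
        assume a: "gof s y \<le> gof s x + c x y"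
        show ?thesis
        proof (cases "x = t")
          case True then show ?thesis using dq' by force
        next
          case False then show ?thesis using a gof' gle[of y] by (metis order_trans)
        qed
      qed (use dq' False in auto)
    qed
  qed
  have "Phi s' < Phi s"
    unfolding Phi_def dom'
  proof (rule sum_strict_mono_ex1)
    show "finite (dom (nodes s))" using inv_base_fin[OF I] .
    have sub: "\<And>x. {v \<in> W. v < gof s' x} \<subseteq> {v \<in> W. v < gof s x}" using gle by (auto intro: less_le_trans)
    show "\<forall>x\<in>dom (nodes s). card {v \<in> W. v < gof s' x} \<le> card {v \<in> W. v < gof s x}"
      using sub W_fin by (simp add: card_mono)
    have "{v \<in> W. v < gof s' t} \<subset> {v \<in> W. v < gof s t}"
      using sub[of t] gof' glt W_add[OF gfr lfr lt] g'_def by auto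
    then show "\<exists>x\<in>dom (nodes s). card {v \<in> W. v < gof s' x} < card {v \<in> W. v < gof s x}"
      using tdom W_fin psubset_card_mono by blast
  qed
  then show ?thesis using inv' Lc' s'_def by simp
qed

end


context lac begin

lemma relax_inv:
  "inv_base s \<Longrightarrow> fr \<in> dom (nodes s) \<Longrightarrow> set ts \<subseteq> set (nbrs (nd s fr)) \<Longrightarrow> Lc s fr (set ts \<union> T) \<Longrightarrow>
   inv_base (relax c h fr ts s) \<and> Lc (relax c h fr ts s) fr T \<and>
   (relax c h fr ts s = s \<or> Phi (relax c h fr ts s) < Phi s) \<and>
   dom (nodes (relax c h fr ts s)) = dom (nodes s) \<and>
   (\<forall>x. tree (nd (relax c h fr ts s) x) = tree (nd s x)) \<and>
   goal (relax c h fr ts s) = goal s \<and> in_dijk (relax c h fr ts s) = in_dijk s"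
proof (induction ts arbitrary: s)
  case Nil
  then show ?case by simp
next
  case (Cons t ts)
  have tn: "t \<in> set (nbrs (nd s fr))" using Cons.prems by auto
  have tdom: "t \<in> dom (nodes s)" using Cons.prems(1,2) tn unfolding inv_base_def I_nbrs_def by blast
  define s1 where "s1 = rstep fr t s"
  have L: "Lc s fr (insert t (set ts \<union> T))" using Cons.prems(4) by simp
  have r1: "inv_base s1 \<and> Lc s1 fr (set ts \<union> T) \<and> (s1 = s \<or> Phi s1 < Phi s)"
    using rstep_inv[OF Cons.prems(1,2) tn L] s1_def by simp
  note sm = rstep_same[OF tdom, of fr, folded s1_def]
  have p2: "fr \<in> dom (nodes s1)" using sm Cons.prems(2) by simp
  have p3: "set ts \<subseteq> set (nbrs (nd s1 fr))" using sm Cons.prems(3) by simp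
  have IH: "inv_base (relax c h fr ts s1) \<and> Lc (relax c h fr ts s1) fr T \<and>
   (relax c h fr ts s1 = s1 \<or> Phi (relax c h fr ts s1) < Phi s1) \<and>
   dom (nodes (relax c h fr ts s1)) = dom (nodes s1) \<and>
   (\<forall>x. tree (nd (relax c h fr ts s1) x) = tree (nd s1 x)) \<and>
   goal (relax c h fr ts s1) = goal s1 \<and> in_dijk (relax c h fr ts s1) = in_dijk s1"
    using Cons.IH[of s1] r1 p2 p3 by blast
  have eq: "relax c h fr (t # ts) s = relax c h fr ts s1" unfolding s1_def by (rule relax_Cons)
  show ?case unfolding eq using IH r1 sm by auto
qed

definition wt :: "(nat \<times> 'v) list \<Rightarrow> nat" where "wt C = (card (UNIV :: 'v set) + 1) ^ (n - length C)"
definition tw :: "(nat \<times> 'v) list list \<Rightarrow> nat" where "tw Cs = sum_list (map wt Cs)"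

lemma children_w:
  assumes "expand_tree n adj q ord C us" shows "tw (new_children n ord C us) < wt C"
proof (cases "length C < n")
  case True
  let ?m = "card (UNIV :: 'v set)"
  have d: "distinct us" using assms True unfolding expand_tree_def by simp
  have "length us = card (set us)" using distinct_card[OF d] by simp
  also have "\<dots> \<le> ?m" by (rule card_mono) auto
  finally have lu: "length us \<le> ?m" .
  have "tw (new_children n ord C us) = length us * (?m + 1) ^ (n - Suc (length C))"
    using True unfolding tw_def new_children_def wt_def by (simp add: o_def sum_list_triv)
  also have "\<dots> \<le> ?m * (?m + 1) ^ (n - Suc (length C))" using lu by simp
  also have "\<dots> < (?m + 1) * (?m + 1) ^ (n - Suc (length C))" by simp
  also have "\<dots> = wt C" unfolding wt_def using True
    by (metis Suc_diff_Suc power_Suc)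
  finally show ?thesis .
next
  case False
  then show ?thesis unfolding tw_def new_children_def wt_def by simp
qed

definition M1 :: "'v lstate \<Rightarrow> nat" where
  "M1 s = ((card (UNIV :: 'v set) + 1) ^ n + 1) * card ({xs :: 'v list. length xs = n} - dom (nodes s)) +
          (\<Sum>x\<in>dom (nodes s). tw (tree (nd s x)))"

definition dqm :: "'v lstate \<Rightarrow> nat" where
  "dqm s = (if in_dijk s then Suc (length (dq s)) else 0)"

definition mrel :: "('v lstate \<times> 'v lstate) set" where
  "mrel = measures [M1, Phi, dqm, \<lambda>s. length (opn s)]"

lemma ord_facts:
  assumes "inv_base s" "x \<in> dom (nodes s)"
  shows "distinct (ordr (nd s x))" "set (ordr (nd s x)) = {..<n}" "length (ordr (nd s x)) = n"
proof -
  show d: "distinct (ordr (nd s x))" and st: "set (ordr (nd s x)) = {..<n}"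
    using assms unfolding inv_base_def I_ord_def by auto
  show "length (ordr (nd s x)) = n" using distinct_card[OF d] st by simp
qed

lemma tree_C:
  assumes "inv_base s" "x \<in> dom (nodes s)" "C \<in> set (tree (nd s x))"
  shows "length C \<le> n" "\<And>j. j < length C \<Longrightarrow> fst (C!j) = ordr (nd s x) ! j"
    "\<forall>(i,u)\<in>set C. i < n"
proof -
  show l: "length C \<le> n" and f: "\<And>j. j < length C \<Longrightarrow> fst (C!j) = ordr (nd s x) ! j"
    using assms unfolding inv_base_def I_tree_def by auto
  show "\<forall>(i,u)\<in>set C. i < n"
  proof
    fix p assume "p \<in> set C"
    then obtain j where j: "j < length C" "C!j = p" by (auto simp: in_set_conv_nth)
    then have "fst p = ordr (nd s x) ! j" using f by auto
    moreover have "j < length (ordr (nd s x))" using ord_facts[OF assms(1,2)] l j by simp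
    ultimately have "fst p \<in> set (ordr (nd s x))" by simp
    then show "case p of (i,u) \<Rightarrow> i < n" using ord_facts[OF assms(1,2)] by (cases p) auto
  qed
qed

lemma gen_conn:
  assumes "inv_base s" "q \<in> dom (nodes s)" "C \<in> set (tree (nd s q))" "gen q C = Some Q'"
  shows "connected n adj q Q'" "\<forall>(i,u)\<in>set C. Q'!i = u"
proof -
  have lq: "length q = n" using assms unfolding inv_base_def I_len_def by auto
  have v1: "\<forall>Q C Q'. length Q = n \<longrightarrow> (\<forall>(i,u)\<in>set C. i < n) \<longrightarrow> gen Q C = Some Q' \<longrightarrow>
        connected n adj Q Q' \<and> (\<forall>(i,u)\<in>set C. Q'!i = u)"
    using vg unfolding valid_generator_def by (rule conjunct1)
  show "connected n adj q Q'" "\<forall>(i,u)\<in>set C. Q'!i = u"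
  proof -
    have "length q = n \<longrightarrow> (\<forall>(i,u)\<in>set C. i < n) \<longrightarrow> gen q C = Some Q' \<longrightarrow>
        connected n adj q Q' \<and> (\<forall>(i,u)\<in>set C. Q'!i = u)" using v1 by (elim allE)
    then have "connected n adj q Q' \<and> (\<forall>(i,u)\<in>set C. Q'!i = u)"
      using lq tree_C(3)[OF assms(1-3)] assms(4) by (elim impE)
    then show "connected n adj q Q'" "\<forall>(i,u)\<in>set C. Q'!i = u" by auto
  qed
qed

end


context lac begin

lemma compl_step:
  assumes I: "inv_base s" and q: "q \<in> dom (nodes s)" and tr: "tree (nd s q) = C # Cs"
    and ex: "expand_tree n adj q (ordr (nd s q)) C us" and Y: "connected n adj q Y"
  shows "Y \<in> set (nbrs (nd s q)) \<or> gen q C = Some Y \<or>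
    (\<exists>C'\<in>set (Cs @ new_children n (ordr (nd s q)) C us). length C' \<le> n \<and>
        (\<forall>j<length C'. C'!j = (ordr (nd s q) ! j, Y ! (ordr (nd s q) ! j))))"
proof -
  let ?o = "ordr (nd s q)"
  have lo: "length ?o = n" and so: "set ?o = {..<n}" using ord_facts[OF I q] by auto
  have lq: "length q = n" using I q unfolding inv_base_def I_len_def by auto
  have lY: "length Y = n" using Y unfolding connected_def by simp
  have Ymv: "\<And>i. i < n \<Longrightarrow> Y!i \<in> {u. adj (q!i) u} \<union> {q!i}" using Y unfolding connected_def by auto
  have "Y \<in> set (nbrs (nd s q)) \<or> (\<exists>C'\<in>set (C # Cs). length C' \<le> n \<and>
        (\<forall>j<length C'. C'!j = (?o ! j, Y ! (?o ! j))))"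
    using I q Y tr unfolding inv_base_def I_compl_def by metis
  then show ?thesis
  proof (elim disjE bexE)
    fix C' assume C': "C' \<in> set (C # Cs)" and w: "length C' \<le> n \<and> (\<forall>j<length C'. C'!j = (?o ! j, Y ! (?o ! j)))"
    show ?thesis
    proof (cases "C' \<in> set Cs")
      case True then show ?thesis using w by auto
    next
      case False
      then have CC: "C' = C" using C' by simp
      show ?thesis
      proof (cases "length C < n")
        case True
        let ?i = "?o ! length C"
        have "?i \<in> set ?o" using True lo by simp
        then have i: "?i < n" using so by auto
        have us: "set us = {u. adj (q ! ?i) u} \<union> {q ! ?i}" using ex True unfolding expand_tree_def by simp
        have "Y ! ?i \<in> set us" using us Ymv[OF i] by simp
        then have mem: "C @ [(?i, Y ! ?i)] \<in> set (new_children n ?o C us)"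
          unfolding new_children_def using True by auto
        have "length (C @ [(?i, Y ! ?i)]) \<le> n" using True by simp
        moreover have "\<forall>j<length (C @ [(?i, Y ! ?i)]). (C @ [(?i, Y ! ?i)])!j = (?o ! j, Y ! (?o ! j))"
        proof (intro allI impI)
          fix j assume "j < length (C @ [(?i, Y ! ?i)])"
          then have "j < length C \<or> j = length C" by auto
          then show "(C @ [(?i, Y ! ?i)])!j = (?o ! j, Y ! (?o ! j))"
            using w CC by (auto simp: nth_append)
        qed
        ultimately show ?thesis using mem
          by (intro disjI2 bexI[where x="C @ [(?i, Y ! ?i)]"]) auto
      next
        case False
        then have lC: "length C = n" using w CC by simp
        have wC: "\<And>j. j < n \<Longrightarrow> C!j = (?o ! j, Y ! (?o ! j))" using w CC lC by auto
        have Cq: "C \<in> set (tree (nd s q))" using tr by simp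
        have idx: "\<forall>(i,u)\<in>set C. i < n" using tree_C(3)[OF I q Cq] .
        have cov: "\<forall>i<n. \<exists>u. (i,u) \<in> set C"
        proof (intro allI impI)
          fix i assume "i < n"
          then have "i \<in> set ?o" using so by simp
          then obtain j where j: "j < n" "?o ! j = i" using lo by (auto simp: in_set_conv_nth)
          then have "C!j \<in> set C" using lC by simp
          then show "\<exists>u. (i,u) \<in> set C" using wC[OF j(1)] j by auto
        qed
        have sat: "\<forall>(i,u)\<in>set C. Y!i = u"
        proof
          fix p assume "p \<in> set C"
          then obtain j where j: "j < n" "C!j = p" using lC by (auto simp: in_set_conv_nth)
          then show "case p of (i,u) \<Rightarrow> Y!i = u" using wC[OF j(1)] by auto
        qed
        have v2: "\<forall>Q C Q'. length Q = n \<longrightarrow> (\<forall>(i,u)\<in>set C. i < n) \<longrightarrow> (\<forall>i<n. \<exists>u. (i,u) \<in> set C) \<longrightarrow>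
          connected n adj Q Q' \<longrightarrow> (\<forall>(i,u)\<in>set C. Q'!i = u) \<longrightarrow> gen Q C \<noteq> None"
          using vg unfolding valid_generator_def by (rule conjunct2)
        have "length q = n \<longrightarrow> (\<forall>(i,u)\<in>set C. i < n) \<longrightarrow> (\<forall>i<n. \<exists>u. (i,u) \<in> set C) \<longrightarrow>
          connected n adj q Y \<longrightarrow> (\<forall>(i,u)\<in>set C. Y!i = u) \<longrightarrow> gen q C \<noteq> None"
          using v2 by (elim allE)
        then have "gen q C \<noteq> None" using lq idx cov Y sat by blast
        then obtain Q'' where g: "gen q C = Some Q''" by auto
        have cQ: "connected n adj q Q''" and sQ: "\<forall>(i,u)\<in>set C. Q''!i = u" using gen_conn[OF I q Cq g] by auto
        have lQ: "length Q'' = n" using cQ unfolding connected_def by simp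
        have "Q'' = Y"
        proof (rule nth_equalityI)
          show "length Q'' = length Y" using lQ lY by simp
          fix i assume "i < length Q''"
          then have i: "i < n" using lQ by simp
          obtain u where "(i,u) \<in> set C" using cov i by blast
          then show "Q''!i = Y!i" using sQ sat by auto
        qed
        then show ?thesis using g by simp
      qed
    qed
  qed simp
qed

lemma tree_step:
  assumes I: "inv_base s" and q: "q \<in> dom (nodes s)" and tr: "tree (nd s q) = C # Cs"
  shows "\<forall>C'\<in>set (Cs @ new_children n (ordr (nd s q)) C us). length C' \<le> n \<and>
        (\<forall>j<length C'. fst (C'!j) = ordr (nd s q) ! j)"
proof
  fix C' assume C': "C' \<in> set (Cs @ new_children n (ordr (nd s q)) C us)"
  have tC: "\<And>D. D \<in> set (C # Cs) \<Longrightarrow> length D \<le> n \<and> (\<forall>j<length D. fst (D!j) = ordr (nd s q) ! j)"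
    using tree_C(1,2)[OF I q] tr by (metis list.set_intros(2) set_ConsD tr)
  show "length C' \<le> n \<and> (\<forall>j<length C'. fst (C'!j) = ordr (nd s q) ! j)"
  proof (cases "C' \<in> set Cs")
    case True then show ?thesis using tC by simp
  next
    case False
    then have lt: "length C < n" and "C' \<in> set (new_children n (ordr (nd s q)) C us)"
      using C' unfolding new_children_def by (auto split: if_splits)
    then obtain u where u: "C' = C @ [(ordr (nd s q) ! length C, u)]"
      unfolding new_children_def by auto
    have "length C' \<le> n" using u lt by simp
    moreover have "\<forall>j<length C'. fst (C'!j) = ordr (nd s q) ! j"
    proof (intro allI impI)
      fix j assume "j < length C'"
      then have "j < length C \<or> j = length C" using u by auto
      then show "fst (C'!j) = ordr (nd s q) ! j" using tC[of C] u by (auto simp: nth_append)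
    qed
    ultimately show ?thesis by simp
  qed
qed

lemma same_nodes:
  assumes "nodes s' = nodes s"
  shows "gof s' = gof s" "fof h s' = fof h s" "parrel s' = parrel s" "M1 s' = M1 s" "Phi s' = Phi s"
  using assms unfolding gof_def fof_def parrel_def M1_def Phi_def by simp_all

lemma gl_facts:
  assumes I: "inv_base s" and q: "q \<in> dom (nodes s)" and gl: "gl = (if q = G then Some q else goal s)"
  shows "gl = None \<or> (gl = Some G \<and> G \<in> dom (nodes s))" "goal s \<noteq> None \<Longrightarrow> gl = goal s"
    "q = G \<Longrightarrow> gl = Some G"
  using I q gl unfolding inv_base_def I_goal_def by auto

lemma pop_inv:
  assumes inv: "inv s" and nd: "\<not> in_dijk s" and o: "opn s = q # rest"
    and gl: "gl = (if q = G then Some q else goal s)"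
    and cond: "tree (nd s q) = [] \<or> (\<exists>qg. gl = Some qg \<and> fof h s qg \<le> fof h s q)"
  shows "inv (s\<lparr>opn := rest, goal := gl\<rparr>) \<and> (s\<lparr>opn := rest, goal := gl\<rparr>, s) \<in> mrel"
proof -
  define s' where "s' = s\<lparr>opn := rest, goal := gl\<rparr>"
  have I: "inv_base s" using inv unfolding inv_def by simp
  have Il: "I_len s" and IS: "I_S s" and Io: "I_opn s" and Id: "I_dq s" and In: "I_nbrs s"
    and Ip: "I_par s" and Ir: "I_root s" and IW: "I_W s" and Ia: "I_acyc s" and Ig: "I_goal s"
    and IG: "I_G s" and Ie: "I_exp s" and Iord: "I_ord s" and It: "I_tree s" and Ic: "I_compl s"
    using I unfolding inv_base_def by auto
  have q: "q \<in> dom (nodes s)" using Io o unfolding I_opn_def by auto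
  have nn: "nodes s' = nodes s" unfolding s'_def by simp
  note sn = same_nodes[OF nn]
  have o': "opn s' = rest" "goal s' = gl" "dq s' = dq s" "in_dijk s' = in_dijk s" unfolding s'_def by simp_all
  note glf = gl_facts[OF I q gl]
  have "I_len s'" using Il nn unfolding I_len_def by simp
  moreover have "I_S s'" using IS nn sn unfolding I_S_def by simp
  moreover have "I_opn s'" using Io nn o o' unfolding I_opn_def by simp
  moreover have "I_dq s'" using Id nn o' unfolding I_dq_def by simp
  moreover have "I_nbrs s'" using In nn unfolding I_nbrs_def by simp
  moreover have "I_par s'" using Ip nn sn unfolding I_par_def by simp
  moreover have "I_root s'" using Ir nn unfolding I_root_def by simp
  moreover have "I_W s'" using IW nn sn unfolding I_W_def by simp
  moreover have "I_acyc s'" using Ia sn unfolding I_acyc_def by simp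
  moreover have "I_goal s'" using glf(1) nn o' unfolding I_goal_def by simp
  moreover have "I_G s'"
    unfolding I_G_def
  proof (intro impI)
    assume G: "G \<in> dom (nodes s')" "G \<notin> set (opn s')"
    show "goal s' \<noteq> None"
    proof (cases "q = G")
      case True then show ?thesis using glf(3) o' by simp
    next
      case False
      then have "G \<notin> set (opn s)" using G o o' by simp
      then have "goal s \<noteq> None" using IG G nn unfolding I_G_def by simp
      then show ?thesis using glf(2) o' by simp
    qed
  qed
  moreover have "I_exp s'"
    unfolding I_exp_def
  proof (intro ballI impI)
    fix x assume x: "x \<in> dom (nodes s')" "x \<notin> set (opn s')"
    show "tree (nd s' x) = [] \<or> (\<exists>qg. goal s' = Some qg \<and> fof h s' qg \<le> fof h s' x)"
    proof (cases "x = q")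
      case True then show ?thesis using cond nn sn o' by simp
    next
      case False
      then have "x \<notin> set (opn s)" using x o o' by simp
      then have "tree (nd s x) = [] \<or> (\<exists>qg. goal s = Some qg \<and> fof h s qg \<le> fof h s x)"
        using Ie x nn unfolding I_exp_def by simp
      then show ?thesis using glf(2) nn sn o' by auto
    qed
  qed
  moreover have "I_ord s'" using Iord nn unfolding I_ord_def by simp
  moreover have "I_tree s'" using It nn unfolding I_tree_def by simp
  moreover have "I_compl s'" using Ic nn unfolding I_compl_def by simp
  ultimately have "inv_base s'" unfolding inv_base_def by blast
  moreover have "\<forall>x\<in>dom (nodes s'). \<forall>y\<in>set (nbrs (nd s' x)).
      gof s' y \<le> gof s' x + c x y \<or> (in_dijk s' \<and> x \<in> fst ` set (dq s'))"
    using inv nn sn o' unfolding inv_def by simp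
  ultimately have "inv s'" unfolding inv_def by blast
  moreover have "(s', s) \<in> mrel" unfolding mrel_def using sn o' o nd by (simp add: dqm_def)
  ultimately show ?thesis unfolding s'_def by simp
qed

lemma M1_q_dec:
  assumes I: "inv_base s" and q: "q \<in> dom (nodes s)" and tr: "tree (nd s q) = C # Cs"
    and ex: "expand_tree n adj q (ordr (nd s q)) C us"
    and nn: "nodes s' = (nodes s)(q \<mapsto> N)" and tN: "tree N = Cs @ new_children n (ordr (nd s q)) C us"
  shows "(\<Sum>x\<in>dom (nodes s'). tw (tree (nd s' x))) < (\<Sum>x\<in>dom (nodes s). tw (tree (nd s x)))"
proof -
  have fin: "finite (dom (nodes s))" using inv_base_fin[OF I] .
  have d: "dom (nodes s') = dom (nodes s)" using nn q by auto
  have lt: "tw (tree (nd s' q)) < tw (tree (nd s q))"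
    using nn tN tr children_w[OF ex] unfolding tw_def by simp
  have eq: "(\<Sum>x\<in>dom (nodes s) - {q}. tw (tree (nd s' x))) = (\<Sum>x\<in>dom (nodes s) - {q}. tw (tree (nd s x)))"
    using nn by (intro sum.cong) auto
  show ?thesis unfolding d using sum.remove[OF fin q, of "\<lambda>x. tw (tree (nd s' x))"]
      sum.remove[OF fin q, of "\<lambda>x. tw (tree (nd s x))"] eq lt by simp
qed

lemma gen_upd_inv:
  assumes inv: "inv s" and nd: "\<not> in_dijk s" and o: "opn s = q # rest"
    and gl: "gl = (if q = G then Some q else goal s)"
    and tr: "tree (nd s q) = C # Cs"
    and ex: "expand_tree n adj q (ordr (nd s q)) C us"
    and E: "\<forall>e\<in>set E. e \<in> dom (nodes s) \<and> connected n adj q e"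
    and gE: "\<And>Y. gen q C = Some Y \<Longrightarrow> Y \<in> set E"
    and bD: "(b = False \<and> D = dq s \<and> E = []) \<or> (b = True \<and> D = [(q, gval (nd s q))])"
    and s'def: "s' = s\<lparr>goal := gl, nodes := (nodes s)(q \<mapsto> (nd s q)\<lparr>tree := Cs @ new_children n (ordr (nd s q)) C us,
                     nbrs := nbrs (nd s q) @ E\<rparr>), in_dijk := b, dq := D\<rparr>"
  shows "inv s' \<and> (s', s) \<in> mrel"
proof -
  have I: "inv_base s" using inv unfolding inv_def by simp
  have Il: "I_len s" and IS: "I_S s" and Io: "I_opn s" and Id: "I_dq s" and In: "I_nbrs s"
    and Ip: "I_par s" and Ir: "I_root s" and IW: "I_W s" and Ia: "I_acyc s" and Ig: "I_goal s"
    and IG: "I_G s" and Ie: "I_exp s" and Iord: "I_ord s" and It: "I_tree s" and Ic: "I_compl s"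
    using I unfolding inv_base_def by auto
  have q: "q \<in> dom (nodes s)" using Io o unfolding I_opn_def by auto
  define N where "N = (nd s q)\<lparr>tree := Cs @ new_children n (ordr (nd s q)) C us, nbrs := nbrs (nd s q) @ E\<rparr>"
  have nn: "nodes s' = (nodes s)(q \<mapsto> N)" using s'def N_def by simp
  have o': "opn s' = opn s" "goal s' = gl" "dq s' = D" "in_dijk s' = b" using s'def by simp_all
  have dom': "dom (nodes s') = dom (nodes s)" using nn q by auto
  have nd': "\<And>x. nd s' x = (if x = q then N else nd s x)" using nn by simp
  have gof': "gof s' = gof s" unfolding gof_def using nd' N_def by (auto simp: fun_eq_iff)
  have fof': "fof h s' = fof h s" unfolding fof_def gof' ..
  have par': "\<And>x. par (nd s' x) = par (nd s x)" "\<And>x. ordr (nd s' x) = ordr (nd s x)"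
    using nd' N_def by auto
  have parrel': "parrel s' = parrel s" unfolding parrel_def dom' par' ..
  have nb': "\<And>x. nbrs (nd s' x) = (if x = q then nbrs (nd s q) @ E else nbrs (nd s x))"
    "\<And>x. tree (nd s' x) = (if x = q then Cs @ new_children n (ordr (nd s q)) C us else tree (nd s x))"
    using nd' N_def by auto
  note glf = gl_facts[OF I q gl]
  have "I_len s'" using Il dom' unfolding I_len_def by simp
  moreover have "I_S s'" using IS dom' gof' par' unfolding I_S_def by simp
  moreover have "I_opn s'" using Io dom' o' unfolding I_opn_def by simp
  moreover have "I_dq s'" using bD
  proof
    assume "b = False \<and> D = dq s \<and> E = []"
    then show ?thesis using Id dom' o' unfolding I_dq_def by simp
  next
    assume "b = True \<and> D = [(q, gval (nd s q))]"
    then show ?thesis using q dom' o' unfolding I_dq_def by simp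
  qed
  moreover have "I_nbrs s'" using In dom' nb' E q unfolding I_nbrs_def by auto
  moreover have "I_par s'" using Ip dom' gof' par' unfolding I_par_def by simp
  moreover have "I_root s'" using Ir dom' par' unfolding I_root_def by simp
  moreover have "I_W s'" using IW dom' gof' unfolding I_W_def by simp
  moreover have "I_acyc s'" using Ia parrel' unfolding I_acyc_def by simp
  moreover have "I_goal s'" using glf(1) dom' o' unfolding I_goal_def by simp
  moreover have "I_G s'"
    unfolding I_G_def
  proof (intro impI)
    assume G: "G \<in> dom (nodes s')" "G \<notin> set (opn s')"
    then have "goal s \<noteq> None" using IG dom' o' unfolding I_G_def by simp
    then show "goal s' \<noteq> None" using glf(2) o' by simp
  qed
  moreover have "I_exp s'"
    unfolding I_exp_def
  proof (intro ballI impI)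
    fix x assume x: "x \<in> dom (nodes s')" "x \<notin> set (opn s')"
    then have xq: "x \<noteq> q" using o o' by auto
    have "tree (nd s x) = [] \<or> (\<exists>qg. goal s = Some qg \<and> fof h s qg \<le> fof h s x)"
      using Ie x dom' o' unfolding I_exp_def by simp
    then show "tree (nd s' x) = [] \<or> (\<exists>qg. goal s' = Some qg \<and> fof h s' qg \<le> fof h s' x)"
      using glf(2) xq nb' fof' o' by auto
  qed
  moreover have "I_ord s'" using Iord dom' par' unfolding I_ord_def by simp
  moreover have "I_tree s'"
    using It dom' par' nb' tree_step[OF I q tr, of us] unfolding I_tree_def by auto
  moreover have "I_compl s'"
    unfolding I_compl_def
  proof (intro ballI allI impI)
    fix x Y assume x: "x \<in> dom (nodes s')" and Y: "connected n adj x Y"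
    show "Y \<in> set (nbrs (nd s' x)) \<or> (\<exists>C'\<in>set (tree (nd s' x)). length C' \<le> n \<and>
            (\<forall>j<length C'. C'!j = (ordr (nd s' x) ! j, Y ! (ordr (nd s' x) ! j))))"
    proof (cases "x = q")
      case True
      then show ?thesis using compl_step[OF I q tr ex, of Y] Y gE nb' par' by auto
    next
      case False
      then show ?thesis using Ic x dom' Y nb' par' unfolding I_compl_def by auto
    qed
  qed
  ultimately have "inv_base s'" unfolding inv_base_def by blast
  moreover have "\<forall>x\<in>dom (nodes s'). \<forall>y\<in>set (nbrs (nd s' x)).
      gof s' y \<le> gof s' x + c x y \<or> (in_dijk s' \<and> x \<in> fst ` set (dq s'))"
  proof (intro ballI)
    fix x y assume x: "x \<in> dom (nodes s')" and y: "y \<in> set (nbrs (nd s' x))"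
    have old: "\<And>y. y \<in> set (nbrs (nd s x)) \<Longrightarrow> gof s y \<le> gof s x + c x y"
      using inv x dom' nd unfolding inv_def by auto
    show "gof s' y \<le> gof s' x + c x y \<or> (in_dijk s' \<and> x \<in> fst ` set (dq s'))"
    proof (cases "x = q \<and> y \<in> set E")
      case True
      then have "b = True \<and> D = [(q, gval (nd s q))]" using bD by auto
      then show ?thesis using True o' by auto
    next
      case False
      then have "y \<in> set (nbrs (nd s x))" using y nb' by (auto split: if_splits)
      then show ?thesis using old gof' by simp
    qed
  qed
  ultimately have "inv s'" unfolding inv_def by blast
  moreover have "M1 s' < M1 s"
  proof -
    have "(\<Sum>x\<in>dom (nodes s'). tw (tree (nd s' x))) < (\<Sum>x\<in>dom (nodes s). tw (tree (nd s x)))"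
      using M1_q_dec[OF I q tr ex nn] N_def by simp
    then show ?thesis unfolding M1_def dom' by simp
  qed
  then have "(s', s) \<in> mrel" unfolding mrel_def by simp
  ultimately show ?thesis by simp
qed

lemma gen_new_inv:
  assumes inv: "inv s" and nd: "\<not> in_dijk s" and o: "opn s = q # rest"
    and gl: "gl = (if q = G then Some q else goal s)"
    and tr: "tree (nd s q) = C # Cs"
    and ex: "expand_tree n adj q (ordr (nd s q)) C us"
    and gQ: "gen q C = Some Q'" and nQ: "nodes s Q' = None"
    and o1: "distinct o'" and o2: "set o' = {..<n}"
    and s'def: "s' = s\<lparr>goal := gl,
             nodes := ((nodes s)(q \<mapsto> (nd s q)\<lparr>tree := Cs @ new_children n (ordr (nd s q)) C us,
                                         nbrs := nbrs (nd s q) @ [Q']\<rparr>))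
                      (Q' \<mapsto> \<lparr>tree = [[]], par = Some q, nbrs = [],
                              gval = gval (nd s q) + c q Q', ordr = o'\<rparr>),
             opn := Q' # opn s\<rparr>"
  shows "inv s' \<and> (s', s) \<in> mrel"
proof -
  have I: "inv_base s" using inv unfolding inv_def by simp
  have Il: "I_len s" and IS: "I_S s" and Io: "I_opn s" and Id: "I_dq s" and In: "I_nbrs s"
    and Ip: "I_par s" and Ir: "I_root s" and IW: "I_W s" and Ia: "I_acyc s" and Ig: "I_goal s"
    and IG: "I_G s" and Ie: "I_exp s" and Iord: "I_ord s" and It: "I_tree s" and Ic: "I_compl s"
    using I unfolding inv_base_def by auto
  have q: "q \<in> dom (nodes s)" using Io o unfolding I_opn_def by auto
  have Qn: "Q' \<notin> dom (nodes s)" using nQ by auto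
  have Qq: "Q' \<noteq> q" using q Qn by auto
  have Cq: "C \<in> set (tree (nd s q))" using tr by simp
  have con: "connected n adj q Q'" using gen_conn[OF I q Cq gQ] by simp
  have lQ: "length Q' = n" and lq: "length q = n" using con unfolding connected_def by auto
  define NQ where "NQ = (nd s q)\<lparr>tree := Cs @ new_children n (ordr (nd s q)) C us, nbrs := nbrs (nd s q) @ [Q']\<rparr>"
  define NN where "NN = \<lparr>tree = [[]], par = Some q, nbrs = [], gval = gval (nd s q) + c q Q', ordr = o'\<rparr>"
  have nn: "nodes s' = ((nodes s)(q \<mapsto> NQ))(Q' \<mapsto> NN)" using s'def NQ_def NN_def by simp
  have o': "opn s' = Q' # opn s" "goal s' = gl" "dq s' = dq s" "in_dijk s' = in_dijk s" using s'def by simp_all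
  have dom': "dom (nodes s') = insert Q' (dom (nodes s))" using nn q by auto
  have nd': "\<And>x. nd s' x = (if x = Q' then NN else if x = q then NQ else nd s x)" using nn Qq by simp
  have gof': "\<And>x. gof s' x = (if x = Q' then gof s q + c q Q' else gof s x)"
    unfolding gof_def using nd' NN_def NQ_def by simp
  have par': "\<And>x. par (nd s' x) = (if x = Q' then Some q else par (nd s x))"
    "\<And>x. ordr (nd s' x) = (if x = Q' then o' else ordr (nd s x))"
    using nd' NN_def NQ_def by auto
  have nb': "\<And>x. nbrs (nd s' x) = (if x = Q' then [] else if x = q then nbrs (nd s q) @ [Q'] else nbrs (nd s x))"
    "\<And>x. tree (nd s' x) = (if x = Q' then [[]] else if x = q then Cs @ new_children n (ordr (nd s q)) C us else tree (nd s x))"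
    using nd' NN_def NQ_def by auto
  have gqW: "gof s q \<in> W" using IW q unfolding I_W_def by auto
  note glf = gl_facts[OF I q gl]
  have "I_len s'" using Il dom' lQ unfolding I_len_def by simp
  moreover have "I_S s'" using IS dom' gof' par' Qn unfolding I_S_def by auto
  moreover have "I_opn s'" using Io dom' o' unfolding I_opn_def by auto
  moreover have "I_dq s'" using Id dom' o' unfolding I_dq_def by auto
  moreover have "I_nbrs s'"
    unfolding I_nbrs_def
  proof (intro ballI)
    fix x y assume x: "x \<in> dom (nodes s')" and y: "y \<in> set (nbrs (nd s' x))"
    show "y \<in> dom (nodes s') \<and> connected n adj x y"
    proof (cases "x = Q'")
      case True then show ?thesis using y nb' by simp
    next
      case False
      then have xd: "x \<in> dom (nodes s)" using x dom' by simp
      show ?thesis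
      proof (cases "x = q \<and> y = Q'")
        case True then show ?thesis using con dom' by simp
      next
        case False
        then have "y \<in> set (nbrs (nd s x))" using y nb' \<open>x \<noteq> Q'\<close> by (auto split: if_splits)
        then show ?thesis using In xd dom' unfolding I_nbrs_def by auto
      qed
    qed
  qed
  moreover have "I_par s'"
    unfolding I_par_def
  proof (intro ballI allI impI)
    fix x p assume x: "x \<in> dom (nodes s')" and p: "par (nd s' x) = Some p"
    show "p \<in> dom (nodes s') \<and> connected n adj p x \<and> gof s' p + c p x \<le> gof s' x"
    proof (cases "x = Q'")
      case True then show ?thesis using p par' q dom' con gof' Qq by auto
    next
      case False
      then have "p \<in> dom (nodes s) \<and> connected n adj p x \<and> gof s p + c p x \<le> gof s x"
        using Ip x dom' p par' unfolding I_par_def by auto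
      moreover then have "p \<noteq> Q'" using Qn by auto
      ultimately show ?thesis using dom' gof' False by auto
    qed
  qed
  moreover have "I_root s'" using Ir dom' par' unfolding I_root_def by auto
  moreover have "I_W s'" using IW dom' gof' W_add[OF gqW lq lQ] unfolding I_W_def by auto
  moreover have "I_acyc s'"
  proof -
    have pr: "parrel s' = insert (q, Q') (parrel s)"
      unfolding parrel_def using dom' par' Qn by auto
    have "(Q', q) \<notin> (parrel s)\<^sup>*"
    proof
      assume "(Q', q) \<in> (parrel s)\<^sup>*"
      then show False
      proof (cases rule: converse_rtranclE)
        case base then show ?thesis using Qq by simp
      next
        case (step z)
        then have "z \<in> dom (nodes s)" "par (nd s z) = Some Q'" unfolding parrel_def by auto
        then have "Q' \<in> dom (nodes s)" using Ip unfolding I_par_def by blast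
        then show ?thesis using Qn by simp
      qed
    qed
    then show ?thesis using Ia pr unfolding I_acyc_def by simp
  qed
  moreover have "I_goal s'" using glf(1) dom' o' unfolding I_goal_def by auto
  moreover have "I_G s'"
    unfolding I_G_def
  proof (intro impI)
    assume G: "G \<in> dom (nodes s')" "G \<notin> set (opn s')"
    then have "G \<in> dom (nodes s)" "G \<notin> set (opn s)" using dom' o' by auto
    then have "goal s \<noteq> None" using IG unfolding I_G_def by simp
    then show "goal s' \<noteq> None" using glf(2) o' by simp
  qed
  moreover have "I_exp s'"
    unfolding I_exp_def
  proof (intro ballI impI)
    fix x assume x: "x \<in> dom (nodes s')" "x \<notin> set (opn s')"
    then have xq: "x \<noteq> q" "x \<noteq> Q'" using o o' by auto
    then have xd: "x \<in> dom (nodes s)" using x dom' by auto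
    have "tree (nd s x) = [] \<or> (\<exists>qg. goal s = Some qg \<and> fof h s qg \<le> fof h s x)"
      using Ie xd x o' unfolding I_exp_def by auto
    moreover have "\<And>qg. goal s = Some qg \<Longrightarrow> qg \<noteq> Q'" using Ig Qn unfolding I_goal_def by auto
    ultimately show "tree (nd s' x) = [] \<or> (\<exists>qg. goal s' = Some qg \<and> fof h s' qg \<le> fof h s' x)"
      using glf(2) xq nb' o' gof' unfolding fof_def by auto
  qed
  moreover have "I_ord s'" using Iord dom' par' o1 o2 unfolding I_ord_def by auto
  moreover have "I_tree s'"
    using It dom' par' nb' tree_step[OF I q tr, of us] unfolding I_tree_def by auto
  moreover have "I_compl s'"
    unfolding I_compl_def
  proof (intro ballI allI impI)
    fix x Y assume x: "x \<in> dom (nodes s')" and Y: "connected n adj x Y"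
    show "Y \<in> set (nbrs (nd s' x)) \<or> (\<exists>C'\<in>set (tree (nd s' x)). length C' \<le> n \<and>
            (\<forall>j<length C'. C'!j = (ordr (nd s' x) ! j, Y ! (ordr (nd s' x) ! j))))"
    proof (cases "x = Q'")
      case True then show ?thesis using nb' by auto
    next
      case False
      show ?thesis
      proof (cases "x = q")
        case True
        then show ?thesis using compl_step[OF I q tr ex, of Y] Y gQ nb' par' Qq by auto
      next
        case False
        then show ?thesis using Ic x dom' Y nb' par' \<open>x \<noteq> Q'\<close> unfolding I_compl_def by auto
      qed
    qed
  qed
  ultimately have "inv_base s'" unfolding inv_base_def by blast
  moreover have "\<forall>x\<in>dom (nodes s'). \<forall>y\<in>set (nbrs (nd s' x)).
      gof s' y \<le> gof s' x + c x y \<or> (in_dijk s' \<and> x \<in> fst ` set (dq s'))"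
  proof (intro ballI)
    fix x y assume x: "x \<in> dom (nodes s')" and y: "y \<in> set (nbrs (nd s' x))"
    have xQ: "x \<noteq> Q'" using y nb' by auto
    then have xd: "x \<in> dom (nodes s)" using x dom' by auto
    have old: "\<And>y. y \<in> set (nbrs (nd s x)) \<Longrightarrow> gof s y \<le> gof s x + c x y \<and> y \<noteq> Q'"
      using inv xd nd In Qn unfolding inv_def I_nbrs_def by auto
    show "gof s' y \<le> gof s' x + c x y \<or> (in_dijk s' \<and> x \<in> fst ` set (dq s'))"
    proof (cases "x = q \<and> y = Q'")
      case True
      then show ?thesis using gof' Qq by simp
    next
      case False
      then have "y \<in> set (nbrs (nd s x))" using y nb' xQ by (auto split: if_splits)
      then show ?thesis using old gof' xQ by simp
    qed
  qed
  ultimately have "inv s'" unfolding inv_def by blast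
  moreover have "M1 s' < M1 s"
  proof -
    define s2 where "s2 = s\<lparr>nodes := (nodes s)(q \<mapsto> NQ)\<rparr>"
    have "(\<Sum>x\<in>dom (nodes s2). tw (tree (nd s2 x))) < (\<Sum>x\<in>dom (nodes s). tw (tree (nd s x)))"
      using M1_q_dec[OF I q tr ex, of s2 NQ] NQ_def s2_def by simp
    moreover have "dom (nodes s2) = dom (nodes s)" using s2_def q by auto
    moreover have "(\<Sum>x\<in>dom (nodes s). tw (tree (nd s' x))) = (\<Sum>x\<in>dom (nodes s). tw (tree (nd s2 x)))"
      using nd' Qn s2_def by (intro sum.cong) auto
    ultimately have lt: "(\<Sum>x\<in>dom (nodes s). tw (tree (nd s' x))) < (\<Sum>x\<in>dom (nodes s). tw (tree (nd s x)))"
      by simp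
    have fin: "finite (dom (nodes s))" using inv_base_fin[OF I] .
    have sum': "(\<Sum>x\<in>dom (nodes s'). tw (tree (nd s' x))) = (card (UNIV :: 'v set) + 1) ^ n + (\<Sum>x\<in>dom (nodes s). tw (tree (nd s' x)))"
    proof -
      have "tw (tree (nd s' Q')) = (card (UNIV :: 'v set) + 1) ^ n" using nb'(2)[of Q'] by (simp add: tw_def wt_def)
      then show ?thesis unfolding dom' sum.insert[OF fin Qn] by simp
    qed
    let ?L = "{xs :: 'v list. length xs = n}"
    have Lfin: "finite (?L - dom (nodes s))" using finite_len by simp
    have QL: "Q' \<in> ?L - dom (nodes s)" using lQ Qn by simp
    have cd: "?L - dom (nodes s') = (?L - dom (nodes s)) - {Q'}" using dom' by auto
    have k: "card (?L - dom (nodes s)) = Suc (card (?L - dom (nodes s')))"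
      unfolding cd using card_Suc_Diff1[OF Lfin QL] by simp
    show ?thesis unfolding M1_def k sum' using lt by simp
  qed
  then have "(s', s) \<in> mrel" unfolding mrel_def by simp
  ultimately show ?thesis by simp
qed

lemma inv_base_dq:
  assumes I: "inv_base s" and e: "nodes s' = nodes s" "opn s' = opn s" "goal s' = goal s"
    and d: "fst ` set (dq s') \<subseteq> fst ` set (dq s)"
  shows "inv_base s'"
proof -
  note sn = same_nodes[OF e(1)]
  have Il: "I_len s" and IS: "I_S s" and Io: "I_opn s" and Id: "I_dq s" and In: "I_nbrs s"
    and Ip: "I_par s" and Ir: "I_root s" and IW: "I_W s" and Ia: "I_acyc s" and Ig: "I_goal s"
    and IG: "I_G s" and Ie: "I_exp s" and Iord: "I_ord s" and It: "I_tree s" and Ic: "I_compl s"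
    using I unfolding inv_base_def by auto
  have "I_len s'" using Il e unfolding I_len_def by simp
  moreover have "I_S s'" using IS e sn unfolding I_S_def by simp
  moreover have "I_opn s'" using Io e unfolding I_opn_def by simp
  moreover have "I_dq s'" unfolding I_dq_def e(1) using d Id[unfolded I_dq_def] by (rule subset_trans)
  moreover have "I_nbrs s'" using In e unfolding I_nbrs_def by simp
  moreover have "I_par s'" using Ip e sn unfolding I_par_def by simp
  moreover have "I_root s'" using Ir e unfolding I_root_def by simp
  moreover have "I_W s'" using IW e sn unfolding I_W_def by simp
  moreover have "I_acyc s'" using Ia sn unfolding I_acyc_def by simp
  moreover have "I_goal s'" using Ig e unfolding I_goal_def by simp
  moreover have "I_G s'" using IG e unfolding I_G_def by simp
  moreover have "I_exp s'" using Ie e sn unfolding I_exp_def by simp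
  moreover have "I_ord s'" using Iord e unfolding I_ord_def by simp
  moreover have "I_tree s'" using It e unfolding I_tree_def by simp
  moreover have "I_compl s'" using Ic e unfolding I_compl_def by simp
  ultimately show ?thesis unfolding inv_base_def by blast
qed

lemma M1_eq:
  assumes "dom (nodes s') = dom (nodes s)" "\<And>x. tree (nd s' x) = tree (nd s x)"
  shows "M1 s' = M1 s"
  unfolding M1_def assms by simp

lemma dijk_pop_inv:
  assumes inv: "inv s" and dj: "in_dijk s" and qk: "(q, k) \<in> set (dq s)"
    and s'def: "s' = relax c h q (nbrs (nd s q)) (s\<lparr>dq := remove1 (q, k) (dq s)\<rparr>)"
  shows "inv s' \<and> (s', s) \<in> mrel"
proof -
  have I: "inv_base s" using inv unfolding inv_def by simp
  define s0 where "s0 = s\<lparr>dq := remove1 (q, k) (dq s)\<rparr>"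
  have d0: "fst ` set (dq s0) \<subseteq> fst ` set (dq s)" unfolding s0_def
    by (simp add: image_mono set_remove1_subset)
  have I0: "inv_base s0" by (rule inv_base_dq[OF I _ _ _ d0]) (auto simp: s0_def)
  have q: "q \<in> dom (nodes s)" using I qk unfolding inv_base_def I_dq_def by force
  have q0: "q \<in> dom (nodes s0)" using q s0_def by simp
  have L: "Lc s0 q (set (nbrs (nd s0 q)) \<union> {})"
    unfolding Lc_def
  proof (intro ballI)
    fix x y assume x: "x \<in> dom (nodes s0)" and y: "y \<in> set (nbrs (nd s0 x))"
    have x': "x \<in> dom (nodes s)" and y': "y \<in> set (nbrs (nd s x))" using x y s0_def by simp_all
    have "gof s y \<le> gof s x + c x y \<or> (in_dijk s \<and> x \<in> fst ` set (dq s))"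
      using inv x' y' unfolding inv_def by blast
    moreover have "gof s0 = gof s" using same_nodes[of s0 s] s0_def by simp
    moreover have "x \<noteq> q \<Longrightarrow> x \<in> fst ` set (dq s) \<Longrightarrow> x \<in> fst ` set (dq s0)"
    proof -
      assume "x \<noteq> q" "x \<in> fst ` set (dq s)"
      then obtain k' where "(x, k') \<in> set (dq s)" by force
      moreover have "(x, k') \<noteq> (q, k)" using \<open>x \<noteq> q\<close> by simp
      ultimately have "(x, k') \<in> set (dq s0)" unfolding s0_def by (simp add: in_set_remove1)
      then show ?thesis by force
    qed
    ultimately show "gof s0 y \<le> gof s0 x + c x y \<or> x \<in> fst ` set (dq s0) \<or> (x = q \<and> y \<in> set (nbrs (nd s0 q)) \<union> {})"
      using y by (cases "x = q") auto
  qed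
  have s'0: "s' = relax c h q (nbrs (nd s0 q)) s0" using s'def s0_def by simp
  have R: "inv_base s' \<and> Lc s' q {} \<and> (s' = s0 \<or> Phi s' < Phi s0) \<and>
   dom (nodes s') = dom (nodes s0) \<and> (\<forall>x. tree (nd s' x) = tree (nd s0 x)) \<and>
   goal s' = goal s0 \<and> in_dijk s' = in_dijk s0"
    unfolding s'0 by (rule relax_inv[OF I0 q0 _ L]) simp
  have "inv s'" unfolding inv_def using R dj s0_def unfolding Lc_def by auto
  moreover have "(s', s) \<in> mrel"
  proof -
    have m: "M1 s' = M1 s" using M1_eq[of s' s0] R same_nodes[of s0 s] s0_def by simp
    have p: "Phi s0 = Phi s" using same_nodes[of s0 s] s0_def by simp
    have "dqm s0 < dqm s" unfolding dqm_def s0_def using dj qk by (simp add: length_remove1)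
      (metis One_nat_def Suc_pred length_pos_if_in_set lessI)
    then show ?thesis unfolding mrel_def using R m p by auto
  qed
  ultimately show ?thesis by simp
qed

lemma dijk_end_inv:
  assumes inv: "inv s" and dj: "in_dijk s" and e: "dq s = []"
  shows "inv (s\<lparr>in_dijk := False\<rparr>) \<and> (s\<lparr>in_dijk := False\<rparr>, s) \<in> mrel"
proof -
  have I: "inv_base s" using inv unfolding inv_def by simp
  have "inv_base (s\<lparr>in_dijk := False\<rparr>)" by (rule inv_base_dq[OF I]) auto
  moreover have "\<forall>x\<in>dom (nodes s). \<forall>y\<in>set (nbrs (nd s x)). gof s y \<le> gof s x + c x y"
    using inv e unfolding inv_def by simp
  ultimately have "inv (s\<lparr>in_dijk := False\<rparr>)" unfolding inv_def
    using same_nodes[of "s\<lparr>in_dijk := False\<rparr>" s] by simp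
  moreover have "(s\<lparr>in_dijk := False\<rparr>, s) \<in> mrel" unfolding mrel_def dqm_def
    using same_nodes[of "s\<lparr>in_dijk := False\<rparr>" s] dj by simp
  ultimately show ?thesis by simp
qed

lemma step_inv:
  assumes inv: "inv s" and st: "lstep n adj G c h gen s s'"
  shows "inv s' \<and> (s', s) \<in> mrel"
  using st
proof cases
  case (pop_goal q rest gl qg)
  have cc: "tree (nd s q) = [] \<or> (\<exists>qg. gl = Some qg \<and> fof h s qg \<le> fof h s q)" using pop_goal by blast
  have "inv (s\<lparr>opn := rest, goal := gl\<rparr>) \<and> (s\<lparr>opn := rest, goal := gl\<rparr>, s) \<in> mrel"
    by (rule pop_inv[OF inv _ _ _ cc]) (use pop_goal in auto)
  then show ?thesis unfolding \<open>s' = s\<lparr>opn := rest, goal := gl\<rparr>\<close> .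
next
  case (pop_empty q rest gl)
  have cc: "tree (nd s q) = [] \<or> (\<exists>qg. gl = Some qg \<and> fof h s qg \<le> fof h s q)" using pop_empty by blast
  have "inv (s\<lparr>opn := rest, goal := gl\<rparr>) \<and> (s\<lparr>opn := rest, goal := gl\<rparr>, s) \<in> mrel"
    by (rule pop_inv[OF inv _ _ _ cc]) (use pop_empty in auto)
  then show ?thesis unfolding \<open>s' = s\<lparr>opn := rest, goal := gl\<rparr>\<close> .
next
  case (gen_none q rest gl nd0 C Cs us)
  have e: "s' = s\<lparr>goal := gl, nodes := (nodes s)(q \<mapsto> (nd s q)\<lparr>tree := Cs @ new_children n (ordr (nd s q)) C us,
                     nbrs := nbrs (nd s q) @ []\<rparr>), in_dijk := False, dq := dq s\<rparr>"
    using gen_none by simp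
  show ?thesis
    by (rule gen_upd_inv[OF inv _ _ _ _ _ _ _ _ e]) (use gen_none in auto)
next
  case (gen_explored q rest gl nd0 C Cs us Q')
  have Cq: "C \<in> set (tree (nd s q))" using gen_explored by simp
  have I: "inv_base s" using inv unfolding inv_def by simp
  have q: "q \<in> dom (nodes s)" using I gen_explored unfolding inv_base_def I_opn_def by auto
  have e: "s' = s\<lparr>goal := gl, nodes := (nodes s)(q \<mapsto> (nd s q)\<lparr>tree := Cs @ new_children n (ordr (nd s q)) C us,
                     nbrs := nbrs (nd s q) @ [Q']\<rparr>), in_dijk := True, dq := [(q, gval (nd s q))]\<rparr>"
    using gen_explored by simp
  show ?thesis
    by (rule gen_upd_inv[OF inv _ _ _ _ _ _ _ _ e])
      (use gen_explored gen_conn[OF I q Cq] in auto)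
next
  case (gen_new q rest gl nd0 C Cs us Q' o')
  show ?thesis by (rule gen_new_inv[OF inv, of q rest gl C Cs us Q' o']) (use gen_new in auto)
next
  case (dijk_pop q k)
  then show ?thesis using dijk_pop_inv[OF inv] by blast
next
  case dijk_end
  then show ?thesis using dijk_end_inv[OF inv] by blast
qed

end


context lac begin

lemma sum_split_add: "(\<Sum>t<a+b. f t) = (\<Sum>t<a. f t) + (\<Sum>t<b. f (a+t :: nat)) " for f :: "nat \<Rightarrow> real"
  by (induction b) (simp_all add: add.assoc)

lemma pc_take: "i < length P \<Longrightarrow> path_cost c (take (Suc i) P) = (\<Sum>t<i. c (P!t) (P!Suc t))"
  unfolding path_cost_def by (intro sum.cong) (auto simp: min_def)

lemma pc_drop: "i < length P \<Longrightarrow> path_cost c (drop i P) = (\<Sum>t<length P - 1 - i. c (P!(i+t)) (P!(i + Suc t)))"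
  unfolding path_cost_def by (intro sum.cong) auto

lemma pc_split: assumes "i < length P"
  shows "path_cost c P = path_cost c (take (Suc i) P) + path_cost c (drop i P)"
proof -
  have "length P - 1 = i + (length P - 1 - i)" using assms by simp
  then have "path_cost c P = (\<Sum>t<i + (length P - 1 - i). c (P!t) (P!Suc t))"
    unfolding path_cost_def by simp
  also have "\<dots> = (\<Sum>t<i. c (P!t) (P!Suc t)) + (\<Sum>t<length P - 1 - i. c (P!(i+t)) (P!Suc (i+t)))"
    by (rule sum_split_add)
  finally show ?thesis using pc_take[OF assms] pc_drop[OF assms] by simp
qed

lemma pc_take_Suc: assumes "Suc i < length P"
  shows "path_cost c (take (Suc (Suc i)) P) = path_cost c (take (Suc i) P) + c (P!i) (P!Suc i)"
  using pc_take[OF assms] pc_take[of i P] assms by simp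

lemma pc_snoc: assumes "P \<noteq> []" shows "path_cost c (P @ [x]) = path_cost c P + c (last P) x"
proof -
  obtain m where m: "length P = Suc m" using assms by (cases P) auto
  have "path_cost c (P @ [x]) = (\<Sum>t<Suc m. c ((P@[x])!t) ((P@[x])!Suc t))"
    unfolding path_cost_def using m by simp
  also have "\<dots> = (\<Sum>t<m. c ((P@[x])!t) ((P@[x])!Suc t)) + c ((P@[x])!m) ((P@[x])!Suc m)"
    by simp
  also have "(\<Sum>t<m. c ((P@[x])!t) ((P@[x])!Suc t)) = (\<Sum>t<m. c (P!t) (P!Suc t))"
    using m by (intro sum.cong) (auto simp: nth_append)
  also have "(P@[x])!m = last P" using m last_conv_nth[OF assms] by (simp add: nth_append)
  also have "(P@[x])!Suc m = x" using m by (simp add: nth_append)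
  finally show ?thesis unfolding path_cost_def using m by simp
qed

lemma is_path_drop: "is_path n adj P \<Longrightarrow> i < length P \<Longrightarrow> is_path n adj (drop i P)"
  unfolding is_path_def by (auto simp: add.commute)

lemma h_G: "h G = 0"
proof -
  have "is_path n adj [G]" unfolding is_path_def by simp
  then have "h G \<le> path_cost c [G]" using adm unfolding admissible_def by auto
  moreover have "path_cost c [G] = 0" unfolding path_cost_def by simp
  moreover have "h G \<ge> 0" using h_nn lenG by simp
  ultimately show ?thesis by simp
qed

lemma chain:
  assumes I: "inv_base s"
  shows "x \<in> dom (nodes s) \<longrightarrow> (\<exists>P. P \<noteq> [] \<and> hd P = S \<and> last P = x \<and> nodes s (hd P) \<noteq> None \<and>
     par (nd s (hd P)) = None \<and>
     (\<forall>t. Suc t < length P \<longrightarrow> nodes s (P ! Suc t) \<noteq> None \<and> par (nd s (P ! Suc t)) = Some (P ! t)) \<and>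
     is_path n adj P \<and> path_cost c P \<le> gof s x)"
proof -
  have IS: "I_S s" and Ip: "I_par s" and Ir: "I_root s" and Ia: "I_acyc s"
    using I unfolding inv_base_def by auto
  have fin: "finite (parrel s)"
  proof -
    have "parrel s \<subseteq> dom (nodes s) \<times> dom (nodes s)" using Ip unfolding parrel_def I_par_def by auto
    then show ?thesis using inv_base_fin[OF I] finite_subset by blast
  qed
  have wf: "wf (parrel s)" using finite_acyclic_wf[OF fin] Ia unfolding I_acyc_def by simp
  show ?thesis
  proof (induction x rule: wf_induct_rule[OF wf])
    case (1 x)
    show ?case
    proof
      assume x: "x \<in> dom (nodes s)"
      show "\<exists>P. P \<noteq> [] \<and> hd P = S \<and> last P = x \<and> nodes s (hd P) \<noteq> None \<and>
       par (nd s (hd P)) = None \<and>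
       (\<forall>t. Suc t < length P \<longrightarrow> nodes s (P ! Suc t) \<noteq> None \<and> par (nd s (P ! Suc t)) = Some (P ! t)) \<and>
       is_path n adj P \<and> path_cost c P \<le> gof s x"
      proof (cases "par (nd s x)")
        case None
        then have xS: "x = S" using Ir x unfolding I_root_def by auto
        show ?thesis
          by (rule exI[of _ "[S]"]) (use IS xS in \<open>auto simp: is_path_def path_cost_def I_S_def\<close>)
      next
        case (Some p)
        then have px: "(p, x) \<in> parrel s" using x unfolding parrel_def by simp
        have pd: "p \<in> dom (nodes s)" and con: "connected n adj p x" and gl: "gof s p + c p x \<le> gof s x"
          using Ip x Some unfolding I_par_def by auto
        obtain P where P: "P \<noteq> []" "hd P = S" "last P = p" "nodes s (hd P) \<noteq> None" "par (nd s (hd P)) = None"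
          "\<forall>t. Suc t < length P \<longrightarrow> nodes s (P ! Suc t) \<noteq> None \<and> par (nd s (P ! Suc t)) = Some (P ! t)"
          "is_path n adj P" "path_cost c P \<le> gof s p"
          using 1 px pd by blast
        have lastP: "P ! (length P - 1) = p" using P(1,3) by (simp add: last_conv_nth)
        have ch: "\<forall>t. Suc t < length (P @ [x]) \<longrightarrow> nodes s ((P @ [x]) ! Suc t) \<noteq> None \<and>
            par (nd s ((P @ [x]) ! Suc t)) = Some ((P @ [x]) ! t)"
        proof (intro allI impI)
          fix t assume t: "Suc t < length (P @ [x])"
          show "nodes s ((P @ [x]) ! Suc t) \<noteq> None \<and> par (nd s ((P @ [x]) ! Suc t)) = Some ((P @ [x]) ! t)"
          proof (cases "Suc t < length P")
            case True then show ?thesis using P(6) by (simp add: nth_append)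
          next
            case False
            then have tt: "t = length P - 1" "Suc t = length P" using t by simp_all
            then show ?thesis using x Some lastP by (auto simp: nth_append)
          qed
        qed
        have ip: "is_path n adj (P @ [x])"
          unfolding is_path_def
        proof (intro conjI allI impI)
          fix t assume t: "Suc t < length (P @ [x])"
          show "connected n adj ((P @ [x]) ! t) ((P @ [x]) ! Suc t)"
          proof (cases "Suc t < length P")
            case True then show ?thesis using P(7) unfolding is_path_def by (simp add: nth_append)
          next
            case False
            then have tt: "t = length P - 1" "Suc t = length P" using t by simp_all
            then show ?thesis using con lastP by (auto simp: nth_append)
          qed
        qed simp
        have "path_cost c (P @ [x]) \<le> gof s x" using pc_snoc[OF P(1), of x] P(3,8) gl by simp
        then show ?thesis using P ch ip
          by (intro exI[of _ "P @ [x]"]) auto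
      qed
    qed
  qed
qed

lemma goal_found:
  assumes inv: "inv s" and fin: "is_final s" and sol: "is_solution n adj S G P'"
  shows "goal s = Some G"
proof (rule ccontr)
  assume ng: "goal s \<noteq> Some G"
  have I: "inv_base s" using inv unfolding inv_def by simp
  have IS: "I_S s" and In: "I_nbrs s" and Ig: "I_goal s" and IG: "I_G s" and Ie: "I_exp s"
    and Ic: "I_compl s" using I unfolding inv_base_def by auto
  have gN: "goal s = None" using Ig ng unfolding I_goal_def by auto
  have op: "opn s = []" using fin unfolding is_final_def by simp
  have ip: "is_path n adj P'" and hd: "hd P' = S" and la: "last P' = G" using sol unfolding is_solution_def by auto
  have ne: "P' \<noteq> []" using ip unfolding is_path_def by simp
  have "\<forall>i < length P'. P'!i \<in> dom (nodes s)"
  proof (intro allI)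
    fix i show "i < length P' \<longrightarrow> P'!i \<in> dom (nodes s)"
    proof (induction i)
      case 0 then show ?case using IS hd ne unfolding I_S_def by (simp add: hd_conv_nth)
    next
      case (Suc i)
      show ?case
      proof
        assume si: "Suc i < length P'"
        then have xd: "P'!i \<in> dom (nodes s)" using Suc by simp
        have "tree (nd s (P'!i)) = []" using Ie xd op gN unfolding I_exp_def by auto
        moreover have "connected n adj (P'!i) (P'!Suc i)" using ip si unfolding is_path_def by simp
        ultimately have "P'!Suc i \<in> set (nbrs (nd s (P'!i)))" using Ic xd unfolding I_compl_def by fastforce
        then show "P'!Suc i \<in> dom (nodes s)" using In xd unfolding I_nbrs_def by auto
      qed
    qed
  qed
  moreover have "length P' - 1 < length P'" using ne by simp
  ultimately have "P'!(length P' - 1) \<in> dom (nodes s)" by blast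
  then have "G \<in> dom (nodes s)" using la ne by (simp add: last_conv_nth)
  then have "goal s \<noteq> None" using IG op unfolding I_G_def by simp
  then show False using gN by simp
qed

lemma opt_bound:
  assumes inv: "inv s" and fin: "is_final s" and gs: "goal s = Some G" and sol: "is_solution n adj S G P'"
  shows "gof s G \<le> path_cost c P'"
proof -
  have I: "inv_base s" using inv unfolding inv_def by simp
  have IS: "I_S s" and In: "I_nbrs s" and Ig: "I_goal s" and Ie: "I_exp s"
    and Ic: "I_compl s" using I unfolding inv_base_def by auto
  have op: "opn s = []" and nd: "\<not> in_dijk s" using fin unfolding is_final_def by auto
  have cons: "\<And>x y. x \<in> dom (nodes s) \<Longrightarrow> y \<in> set (nbrs (nd s x)) \<Longrightarrow> gof s y \<le> gof s x + c x y"
    using inv nd unfolding inv_def by auto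
  have ip: "is_path n adj P'" and hd: "hd P' = S" and la: "last P' = G" using sol unfolding is_solution_def by auto
  have ne: "P' \<noteq> []" using ip unfolding is_path_def by simp
  have fG: "fof h s G = gof s G" unfolding fof_def using h_G by simp
  have claim: "\<forall>i < length P'. gof s G \<le> path_cost c P' \<or>
      (P'!i \<in> dom (nodes s) \<and> gof s (P'!i) \<le> path_cost c (take (Suc i) P'))"
  proof (intro allI)
    fix i show "i < length P' \<longrightarrow> gof s G \<le> path_cost c P' \<or>
      (P'!i \<in> dom (nodes s) \<and> gof s (P'!i) \<le> path_cost c (take (Suc i) P'))"
    proof (induction i)
      case 0
      have "P'!0 = S" using hd ne by (simp add: hd_conv_nth)
      moreover have "path_cost c (take (Suc 0) P') = 0" using pc_take[of 0 P'] ne by simp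
      ultimately show ?case using IS unfolding I_S_def by simp
    next
      case (Suc i)
      show ?case
      proof
        assume si: "Suc i < length P'"
        from Suc si have "gof s G \<le> path_cost c P' \<or>
          (P'!i \<in> dom (nodes s) \<and> gof s (P'!i) \<le> path_cost c (take (Suc i) P'))" by simp
        then show "gof s G \<le> path_cost c P' \<or>
          (P'!Suc i \<in> dom (nodes s) \<and> gof s (P'!Suc i) \<le> path_cost c (take (Suc (Suc i)) P'))"
        proof (elim disjE conjE)
          assume xd: "P'!i \<in> dom (nodes s)" and gx: "gof s (P'!i) \<le> path_cost c (take (Suc i) P')"
          have "tree (nd s (P'!i)) = [] \<or> (\<exists>qg. goal s = Some qg \<and> fof h s qg \<le> fof h s (P'!i))"
            using Ie xd op unfolding I_exp_def by auto
          then show ?thesis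
          proof
            assume tr: "tree (nd s (P'!i)) = []"
            have "connected n adj (P'!i) (P'!Suc i)" using ip si unfolding is_path_def by simp
            then have yn: "P'!Suc i \<in> set (nbrs (nd s (P'!i)))" using Ic xd tr unfolding I_compl_def by fastforce
            then have "P'!Suc i \<in> dom (nodes s)" using In xd unfolding I_nbrs_def by auto
            moreover have "gof s (P'!Suc i) \<le> path_cost c (take (Suc (Suc i)) P')"
              using cons[OF xd yn] gx pc_take_Suc[OF si] by simp
            ultimately show ?thesis by simp
          next
            assume "\<exists>qg. goal s = Some qg \<and> fof h s qg \<le> fof h s (P'!i)"
            then have fle: "gof s G \<le> gof s (P'!i) + h (P'!i)" using gs fG unfolding fof_def by auto
            have il: "i < length P'" using si by simp
            have "is_path n adj (drop i P')" using is_path_drop[OF ip il] .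
            moreover have "hd (drop i P') = P'!i" using il by (simp add: hd_drop_conv_nth)
            moreover have "last (drop i P') = G" using il la by simp
            ultimately have "h (P'!i) \<le> path_cost c (drop i P')" using adm unfolding admissible_def by blast
            then have "gof s G \<le> path_cost c P'" using fle gx pc_split[OF il] by simp
            then show ?thesis by simp
          qed
        qed simp
      qed
    qed
  qed
  have L: "length P' - 1 < length P'" using ne by simp
  have lastn: "P'!(length P' - 1) = G" using la ne by (simp add: last_conv_nth)
  have tk: "take (Suc (length P' - 1)) P' = P'" using ne by simp
  show ?thesis using claim L lastn tk by fastforce
qed

lemma final_ok:
  assumes inv: "inv s" and fin: "is_final s"
  shows "((\<exists>P. is_solution n adj S G P) \<longrightarrow>
              (\<exists>P. returned_path s P \<and> is_solution n adj S G P \<and>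
                   (\<forall>P'. is_solution n adj S G P' \<longrightarrow> path_cost c P \<le> path_cost c P')))
         \<and> ((\<nexists>P. is_solution n adj S G P) \<longrightarrow> goal s = None)"
proof (intro conjI impI)
  have I: "inv_base s" using inv unfolding inv_def by simp
  assume "\<exists>P. is_solution n adj S G P"
  then obtain P0 where P0: "is_solution n adj S G P0" by blast
  have gs: "goal s = Some G" using goal_found[OF inv fin P0] .
  then have Gd: "G \<in> dom (nodes s)" using I unfolding inv_base_def I_goal_def by auto
  obtain P where P: "P \<noteq> []" "hd P = S" "last P = G" "nodes s (hd P) \<noteq> None" "par (nd s (hd P)) = None"
     "\<forall>t. Suc t < length P \<longrightarrow> nodes s (P ! Suc t) \<noteq> None \<and> par (nd s (P ! Suc t)) = Some (P ! t)"
     "is_path n adj P" "path_cost c P \<le> gof s G"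
    using chain[OF I, of G] Gd by blast
  have "returned_path s P" unfolding returned_path_def using P gs by simp
  moreover have "is_solution n adj S G P" unfolding is_solution_def using P by simp
  moreover have "\<forall>P'. is_solution n adj S G P' \<longrightarrow> path_cost c P \<le> path_cost c P'"
    using opt_bound[OF inv fin gs] P(8) by (meson order_trans)
  ultimately show "\<exists>P. returned_path s P \<and> is_solution n adj S G P \<and>
                   (\<forall>P'. is_solution n adj S G P' \<longrightarrow> path_cost c P \<le> path_cost c P')" by blast
next
  have I: "inv_base s" using inv unfolding inv_def by simp
  assume ns: "\<nexists>P. is_solution n adj S G P"
  show "goal s = None"
  proof (rule ccontr)
    assume "goal s \<noteq> None"
    then have Gd: "G \<in> dom (nodes s)" using I unfolding inv_base_def I_goal_def by auto
    obtain P where P: "P \<noteq> []" "hd P = S" "last P = G" "is_path n adj P"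
      using chain[OF I, of G] Gd by blast
    then have "is_solution n adj S G P" unfolding is_solution_def by simp
    then show False using ns by blast
  qed
qed

lemma init_inv:
  assumes "distinct o0" "set o0 = {..<n}"
  shows "inv (init_state S o0)"
proof -
  let ?s = "init_state S o0"
  have dm: "dom (nodes ?s) = {S}" unfolding init_state_def by simp
  have ndS: "nd ?s S = \<lparr>tree = [[]], par = None, nbrs = [], gval = 0, ordr = o0\<rparr>"
    unfolding init_state_def by simp
  have pr: "parrel ?s = {}" unfolding parrel_def dm using ndS by auto
  have "I_len ?s" unfolding I_len_def dm using lenS by simp
  moreover have "I_S ?s" unfolding I_S_def dm gof_def ndS by simp
  moreover have "I_opn ?s" unfolding I_opn_def dm by (simp add: init_state_def)
  moreover have "I_dq ?s" unfolding I_dq_def by (simp add: init_state_def)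
  moreover have "I_nbrs ?s" unfolding I_nbrs_def dm by (simp add: ndS)
  moreover have "I_par ?s" unfolding I_par_def dm by (simp add: ndS)
  moreover have "I_root ?s" unfolding I_root_def dm by (simp add: ndS)
  moreover have "I_W ?s" unfolding I_W_def dm gof_def using W0 by (simp add: ndS)
  moreover have "I_acyc ?s" unfolding I_acyc_def pr by (simp add: acyclic_def)
  moreover have "I_goal ?s" unfolding I_goal_def by (simp add: init_state_def)
  moreover have "I_G ?s" unfolding I_G_def dm by (simp add: init_state_def)
  moreover have "I_exp ?s" unfolding I_exp_def dm by (simp add: init_state_def)
  moreover have "I_ord ?s" unfolding I_ord_def dm using assms by (simp add: ndS)
  moreover have "I_tree ?s" unfolding I_tree_def dm by (simp add: ndS)
  moreover have "I_compl ?s" unfolding I_compl_def dm by (simp add: ndS)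
  ultimately have "inv_base ?s" unfolding inv_base_def by blast
  then show ?thesis unfolding inv_def dm by (simp add: ndS)
qed

lemma reach_inv:
  assumes "(lstep n adj G c h gen)\<^sup>*\<^sup>* (init_state S o0) s" "distinct o0" "set o0 = {..<n}"
  shows "inv s"
  using assms(1)
proof (induction rule: rtranclp_induct)
  case base then show ?case using init_inv[OF assms(2,3)] .
next
  case (step y z) then show ?case using step_inv by blast
qed

lemma no_inf:
  assumes "distinct o0" "set o0 = {..<n}"
  shows "\<nexists>f. f 0 = init_state S o0 \<and> (\<forall>k. lstep n adj G c h gen (f k) (f (Suc k)))"
proof
  assume "\<exists>f. f 0 = init_state S o0 \<and> (\<forall>k. lstep n adj G c h gen (f k) (f (Suc k)))"
  then obtain f where f0: "f 0 = init_state S o0" and fs: "\<forall>k. lstep n adj G c h gen (f k) (f (Suc k))" by blast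
  have r: "(lstep n adj G c h gen)\<^sup>*\<^sup>* (init_state S o0) (f k)" for k
  proof (induction k)
    case 0 then show ?case using f0 by simp
  next
    case (Suc k) then show ?case using fs by (meson rtranclp.rtrancl_into_rtrancl)
  qed
  have "\<forall>k. (f (Suc k), f k) \<in> mrel"
    using step_inv reach_inv[OF r assms] fs by blast
  moreover have "wf mrel" unfolding mrel_def by simp
  ultimately show False using wf_iff_no_infinite_down_chain by blast
qed

end

lemma progress:
  fixes adj :: "'v::finite \<Rightarrow> 'v \<Rightarrow> bool"
  shows "is_final s \<or> (\<exists>s'. lstep n adj G c h gen s s')"
proof (cases "in_dijk s")
  case True
  show ?thesis
  proof (cases "dq s = []")
    case True
    then show ?thesis using lstep.dijk_end[of s] \<open>in_dijk s\<close> by blast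
  next
    case False
    define k where "k = Min (snd ` set (dq s))"
    have "k \<in> snd ` set (dq s)" unfolding k_def using False by (intro Min_in) auto
    then obtain q where qk: "(q, k) \<in> set (dq s)" by force
    have mn: "\<forall>(q', k') \<in> set (dq s). k \<le> k'" unfolding k_def
      by clarsimp (metis Min_le finite_imageI finite_set image_eqI snd_conv)
    show ?thesis using lstep.dijk_pop[OF True qk mn] by blast
  qed
next
  case False
  note nd = False
  show ?thesis
  proof (cases "opn s")
    case Nil then show ?thesis using nd unfolding is_final_def by simp
  next
    case (Cons q rest)
    define gl where "gl = (if q = G then Some q else goal s)"
    show ?thesis
    proof (cases "\<exists>qg. gl = Some qg \<and> fof h s qg \<le> fof h s q")
      case True
      then obtain qg where "gl = Some qg" "fof h s qg \<le> fof h s q" by blast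
      then show ?thesis using lstep.pop_goal[OF nd Cons gl_def] by blast
    next
      case ng: False
      show ?thesis
      proof (cases "tree (the (nodes s q))")
        case Nil then show ?thesis using lstep.pop_empty[OF nd Cons gl_def ng] by blast
      next
        case (Cons C Cs)
        note tr = Cons
        obtain us where ex: "expand_tree n adj q (ordr (the (nodes s q))) C us"
        proof (cases "length C < n")
          case True
          obtain us where "set us = {u. adj (q ! (ordr (the (nodes s q)) ! length C)) u} \<union> {q ! (ordr (the (nodes s q)) ! length C)}"
            "distinct us" using finite_distinct_list[of "{u. adj (q ! (ordr (the (nodes s q)) ! length C)) u} \<union> {q ! (ordr (the (nodes s q)) ! length C)}"]
            by auto
          then show ?thesis using that unfolding expand_tree_def by blast
        next
          case False
          then show ?thesis using that[of "[]"] unfolding expand_tree_def by simp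
        qed
        show ?thesis
        proof (cases "gen q C")
          case None
          then show ?thesis using lstep.gen_none[OF nd \<open>opn s = q # rest\<close> gl_def ng refl[of "the (nodes s q)"] tr ex] by blast
        next
          case (Some Q')
          show ?thesis
          proof (cases "nodes s Q'")
            case None
            obtain o' :: "nat list" where o': "set o' = {..<n}" "distinct o'"
              using finite_distinct_list[of "{..<n}"] by auto
            show ?thesis
              using lstep.gen_new[OF nd \<open>opn s = q # rest\<close> gl_def ng refl[of "the (nodes s q)"] tr ex, where Q'=Q' and o'=o']
                \<open>gen q C = Some Q'\<close> None o' by blast
          next
            case (Some y)
            then have "nodes s Q' \<noteq> None" by simp
            then show ?thesis
              using lstep.gen_explored[OF nd \<open>opn s = q # rest\<close> gl_def ng refl[of "the (nodes s q)"] tr ex, where Q'=Q'] \<open>gen q C = Some Q'\<close> by blast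
          qed
        qed
      qed
    qed
  qed
qed

theorem theorem1:
  fixes adj :: "'v::finite \<Rightarrow> 'v \<Rightarrow> bool" and n :: nat and S G :: "'v list"
    and c :: "'v list \<Rightarrow> 'v list \<Rightarrow> real" and h :: "'v list \<Rightarrow> real"
    and gen :: "'v list \<Rightarrow> (nat \<times> 'v) list \<Rightarrow> 'v list option"
    and o0 :: "nat list"
  assumes "symp adj"
    and "length S = n" and "distinct S" and "length G = n" and "distinct G"
    and "\<forall>X Y. length X = n \<longrightarrow> length Y = n \<longrightarrow> c X Y \<ge> 0"
    and "\<forall>Q. length Q = n \<longrightarrow> h Q \<ge> 0"
    and "admissible n adj G c h"
    and "valid_generator n adj gen"
    and "distinct o0" and "set o0 = {..<n}"
  shows "(\<nexists>f. f 0 = init_state S o0 \<and> (\<forall>k. lstep n adj G c h gen (f k) (f (Suc k))))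
    \<and> (\<forall>s. (lstep n adj G c h gen)\<^sup>*\<^sup>* (init_state S o0) s \<longrightarrow>
           is_final s \<or> (\<exists>s'. lstep n adj G c h gen s s'))
    \<and> (\<forall>s. (lstep n adj G c h gen)\<^sup>*\<^sup>* (init_state S o0) s \<longrightarrow> is_final s \<longrightarrow>
           ((\<exists>P. is_solution n adj S G P) \<longrightarrow>
              (\<exists>P. returned_path s P \<and> is_solution n adj S G P \<and>
                   (\<forall>P'. is_solution n adj S G P' \<longrightarrow> path_cost c P \<le> path_cost c P')))
         \<and> ((\<nexists>P. is_solution n adj S G P) \<longrightarrow> goal s = None))"
proof -
  interpret L: lac adj n S G c h gen
    by unfold_locales (use assms in auto)
  show ?thesis
    using L.no_inf[OF assms(10,11)] progress L.final_ok L.reach_inv[OF _ assms(10,11)] by blast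
qed


end
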